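(* Let $E$ be a separable Banach sequence lattice containing all unit vectors $e_k$, on which the shifts $\tau_n$, $n\in\mathbb Z$, are bounded, and assume that with $s_k:=\|e_k\|_E$, $$k_+(E)=\lim_{n\to\infty}\Big(\sup_{k>n}\frac{s_k}{s_{k-n}}\Big)^{1/n},\qquad k_-(E)=\lim_{n\to\infty}\Big(\sup_{k\in\mathbb N}\frac{s_k}{s_{n+k}}\Big)^{1/n}.$$ For $\lambda>0$ let $T_\lambda=\tau_1-\lambda I$ on $E$. Then the following are equivalent: (i) $T_\lambda$ is an isomorphic embedding of $E$ into itself (there is $c>0$ with $\|T_\lambda x\|_E\ge c\|x\|_E$ for all $x$); (ii) $T_\lambda$ has closed range; (iii) $\lambda\in(0,1/k_-(E))\cup(k_+(E),\infty)$. Moreover, if $\lambda>k_+(E)$ then $T_\lambda(E)=E$, and if $0<\lambda<1/k_-(E)$ then $T_\lambda(E)$ is the closed subspace of codimension $1$ in $E$ consisting of all $(a_k)\in E$ with $\sum_{k=1}^\infty\lambda^ka_k=0$ (this series converging for every $(a_k)\in E$).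
   Context: A Banach sequence lattice is a Banach space $E$ of real sequences such that $x\in E$, $|y_k|\le|x_k|$ imply $y\in E$, $\|y\|_E\le\|x\|_E$. For $n\in\mathbb Z$, $\tau_nx=(x_{k-n})_{k\ge1}$ with $x_j:=0$ for $j\notin\mathbb N$. For a Banach sequence lattice on which all $\tau_n$ are bounded, $k_+(E)=\lim_{n\to\infty}\|\tau_n\|_E^{1/n}$ and $k_-(E)=\lim_{n\to\infty}\|\tau_{-n}\|_E^{1/n}$; the hypothesis says these exponents are computed by the displayed formulas involving only the norms of unit vectors. *)

theory Defs
  imports "HOL-Analysis.Analysis" "HOL-Library.Function_Algebras"
begin

text \<open>Sequences are functions nat => real; the paper's index k (k >= 1) corresponds
  to our index k - 1 (we index from 0).  A Banach sequence lattice is given by a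
  carrier set E and a norm function N (only meaningful on E).\<close>

type_synonym seq = "nat \<Rightarrow> real"

definition banach_seq_lattice :: "seq set \<Rightarrow> (seq \<Rightarrow> real) \<Rightarrow> bool" where
  "banach_seq_lattice E N \<longleftrightarrow>
     (0::seq) \<in> E \<and>
     (\<forall>x\<in>E. \<forall>y\<in>E. x + y \<in> E) \<and>
     (\<forall>x\<in>E. \<forall>c::real. (\<lambda>k. c * x k) \<in> E) \<and>
     (\<forall>x\<in>E. N x \<ge> 0) \<and>
     (\<forall>x\<in>E. N x = 0 \<longleftrightarrow> x = 0) \<and>
     (\<forall>x\<in>E. \<forall>c::real. N (\<lambda>k. c * x k) = \<bar>c\<bar> * N x) \<and>
     (\<forall>x\<in>E. \<forall>y\<in>E. N (x + y) \<le> N x + N y) \<and>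
     (\<forall>f::nat \<Rightarrow> seq. (\<forall>j. f j \<in> E) \<and>
         (\<forall>\<epsilon>>0. \<exists>M. \<forall>i\<ge>M. \<forall>j\<ge>M. N (f i - f j) < \<epsilon>)
         \<longrightarrow> (\<exists>z\<in>E. (\<lambda>j. N (f j - z)) \<longlonglongrightarrow> 0)) \<and>
     (\<forall>x\<in>E. \<forall>y::seq. (\<forall>k. \<bar>y k\<bar> \<le> \<bar>x k\<bar>) \<longrightarrow> y \<in> E \<and> N y \<le> N x)"

definition norm_separable :: "seq set \<Rightarrow> (seq \<Rightarrow> real) \<Rightarrow> bool" where
  "norm_separable E N \<longleftrightarrow>
     (\<exists>D. countable D \<and> D \<subseteq> E \<and> (\<forall>x\<in>E. \<forall>\<epsilon>>0. \<exists>d\<in>D. N (x - d) < \<epsilon>))"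

text \<open>Unit vector (paper's e_{k+1}).\<close>
definition unitv :: "nat \<Rightarrow> seq" where
  "unitv k = (\<lambda>j. if j = k then 1 else 0)"

definition tau :: "int \<Rightarrow> seq \<Rightarrow> seq" where
  "tau n x = (\<lambda>k. if int k - n \<ge> 0 then x (nat (int k - n)) else 0)"

definition bounded_on :: "seq set \<Rightarrow> (seq \<Rightarrow> real) \<Rightarrow> (seq \<Rightarrow> seq) \<Rightarrow> bool" where
  "bounded_on E N T \<longleftrightarrow> (\<forall>x\<in>E. T x \<in> E) \<and> (\<exists>C. \<forall>x\<in>E. N (T x) \<le> C * N x)"

definition opnorm :: "seq set \<Rightarrow> (seq \<Rightarrow> real) \<Rightarrow> (seq \<Rightarrow> seq) \<Rightarrow> real" where
  "opnorm E N T = Sup {N (T x) | x. x \<in> E \<and> N x \<le> 1}"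

definition k_plus :: "seq set \<Rightarrow> (seq \<Rightarrow> real) \<Rightarrow> real" where
  "k_plus E N = lim (\<lambda>n. opnorm E N (tau (int n)) powr (1 / real n))"

definition k_minus :: "seq set \<Rightarrow> (seq \<Rightarrow> real) \<Rightarrow> real" where
  "k_minus E N = lim (\<lambda>n. opnorm E N (tau (- int n)) powr (1 / real n))"

definition Tlam :: "real \<Rightarrow> seq \<Rightarrow> seq" where
  "Tlam l x = (\<lambda>k. tau 1 x k - l * x k)"

definition N_closed :: "seq set \<Rightarrow> (seq \<Rightarrow> real) \<Rightarrow> seq set \<Rightarrow> bool" where
  "N_closed E N S \<longleftrightarrow> (\<forall>f z. (\<forall>j. f j \<in> S) \<and> z \<in> E \<and> (\<lambda>j. N (f j - z)) \<longlonglongrightarrow> 0 \<longrightarrow> z \<in> S)"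

end

theory Submission
  imports Defs
begin

lemma tau1_eq: "tau 1 x k = (if k = 0 then 0 else x (k - 1))"
  by (auto simp: tau_def nat_diff_distrib)

lemma tau_pos: "tau (int n) x k = (if n \<le> k then x (k - n) else 0)"
  by (auto simp: tau_def nat_diff_distrib)

lemma tau_neg: "tau (- int n) x k = x (k + n)"
  by (auto simp: tau_def nat_add_distrib)

lemma Tlam_eq: "Tlam l x k = (if k = 0 then 0 else x (k - 1)) - l * x k"
  by (simp add: Tlam_def tau1_eq)

lemma Tlam_0: "Tlam l x 0 = - l * x 0"
  by (simp add: Tlam_eq)

lemma Tlam_Suc: "Tlam l x (Suc k) = x k - l * x (Suc k)"
  by (simp add: Tlam_eq)

lemma Tlam_add: "Tlam l (x + y) = Tlam l x + Tlam l y"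
  by (auto simp: Tlam_eq fun_eq_iff algebra_simps)

lemma Tlam_diff: "Tlam l (x - y) = Tlam l x - Tlam l y"
  by (auto simp: Tlam_eq fun_eq_iff algebra_simps)

lemma Tlam_scale: "Tlam l (\<lambda>k. c * x k) = (\<lambda>k. c * Tlam l x k)"
  by (auto simp: Tlam_eq fun_eq_iff algebra_simps)

lemma Tlam_sum: "Tlam l (\<Sum>i\<in>I. f i) = (\<Sum>i\<in>I. Tlam l (f i))"
proof (induction I rule: infinite_finite_induct)
  case (infinite A) then show ?case by (simp add: Tlam_eq fun_eq_iff)
next
  case empty then show ?case by (simp add: Tlam_eq fun_eq_iff)
next
  case (insert x F) then show ?case by (simp only: sum.insert[OF insert.hyps] Tlam_add insert.IH)
qed

lemma tau_scale: "tau n (\<lambda>k. c * x k) = (\<lambda>k. c * tau n x k)"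
  by (auto simp: tau_def fun_eq_iff)

lemma tau_add_pos: "tau (int n) (tau (int m) x) = tau (int (n + m)) x"
proof
  fix k
  have "tau (int (n+m)) x k = (if n+m \<le> k then x (k-(n+m)) else 0)" by (rule tau_pos)
  then show "tau (int n) (tau (int m) x) k = tau (int (n + m)) x k"
    by (auto simp: tau_pos)
qed

lemma tau_add_neg: "tau (- int n) (tau (- int m) x) = tau (- int (n + m)) x"
proof
  fix k
  have "tau (- int (n+m)) x k = x (k + (n+m))" by (rule tau_neg)
  then show "tau (- int n) (tau (- int m) x) k = tau (- int (n + m)) x k"
    by (simp add: tau_neg add.commute add.left_commute)
qed

lemma tau_unit_pos: "tau (int n) (unitv k) = unitv (k + n)"
  by (auto simp: tau_pos unitv_def fun_eq_iff)

lemma tau_unit_neg: "tau (- int n) (unitv (k + n)) = unitv k"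
  by (auto simp: tau_neg unitv_def fun_eq_iff)

primrec Tinv :: "real \<Rightarrow> seq \<Rightarrow> nat \<Rightarrow> real" where
  "Tinv l a 0 = - a 0 / l"
| "Tinv l a (Suc m) = (Tinv l a m - a (Suc m)) / l"

lemma Tinv_Tlam: "l \<noteq> 0 \<Longrightarrow> Tinv l (Tlam l x) = x"
proof -
  assume l: "l \<noteq> 0"
  have "Tinv l (Tlam l x) m = x m" for m
    by (induction m) (use l in \<open>auto simp: Tlam_0 Tlam_Suc field_simps\<close>)
  then show ?thesis by auto
qed

lemma Tlam_Tinv: "l \<noteq> 0 \<Longrightarrow> Tlam l (Tinv l a) = a"
proof -
  assume l: "l \<noteq> 0"
  have "Tlam l (Tinv l a) m = a m" for m
    by (cases m) (use l in \<open>auto simp: Tlam_0 Tlam_Suc field_simps\<close>)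
  then show ?thesis by auto
qed

lemma Tlam_inj: "l \<noteq> 0 \<Longrightarrow> Tlam l x = Tlam l y \<Longrightarrow> x = y"
  by (metis Tinv_Tlam)

lemma Tinv_tendsto:
  assumes "\<And>m. (\<lambda>K. a K m) \<longlonglongrightarrow> b m"
  shows "(\<lambda>K. Tinv l (a K) m) \<longlonglongrightarrow> Tinv l b m"
  by (induction m) (auto simp: divide_inverse intro!: tendsto_intros assms)

locale BSL =
  fixes E :: "seq set" and N :: "seq \<Rightarrow> real"
  assumes lat: "banach_seq_lattice E N"
    and units: "\<forall>k. unitv k \<in> E"
begin

lemma zero_in: "0 \<in> E" using lat by (simp add: banach_seq_lattice_def)
lemma add_in: "x \<in> E \<Longrightarrow> y \<in> E \<Longrightarrow> x + y \<in> E" using lat by (simp add: banach_seq_lattice_def)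
lemma scale_in: "x \<in> E \<Longrightarrow> (\<lambda>k. c * x k) \<in> E" using lat by (simp add: banach_seq_lattice_def)
lemma N_nonneg: "x \<in> E \<Longrightarrow> N x \<ge> 0" using lat by (simp add: banach_seq_lattice_def)
lemma N_zero_iff: "x \<in> E \<Longrightarrow> N x = 0 \<longleftrightarrow> x = 0" using lat by (simp add: banach_seq_lattice_def)
lemma N_scale: "x \<in> E \<Longrightarrow> N (\<lambda>k. c * x k) = \<bar>c\<bar> * N x" using lat by (simp add: banach_seq_lattice_def)
lemma N_tri: "x \<in> E \<Longrightarrow> y \<in> E \<Longrightarrow> N (x + y) \<le> N x + N y" using lat by (simp add: banach_seq_lattice_def)
lemma mono: "x \<in> E \<Longrightarrow> (\<And>k. \<bar>y k\<bar> \<le> \<bar>x k\<bar>) \<Longrightarrow> y \<in> E \<and> N y \<le> N x"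
  using lat unfolding banach_seq_lattice_def by blast
lemma complete: "(\<And>j. f j \<in> E) \<Longrightarrow> (\<And>\<epsilon>. \<epsilon> > 0 \<Longrightarrow> \<exists>M. \<forall>i\<ge>M. \<forall>j\<ge>M. N (f i - f j) < \<epsilon>)
   \<Longrightarrow> \<exists>z\<in>E. (\<lambda>j. N (f j - z)) \<longlonglongrightarrow> 0"
  using lat unfolding banach_seq_lattice_def by blast

lemma N_zero: "N 0 = 0" using N_zero_iff zero_in by blast

lemma uminus_in: "x \<in> E \<Longrightarrow> - x \<in> E"
  using scale_in[of x "-1"] by (simp add: fun_Compl_def)

lemma N_uminus: "x \<in> E \<Longrightarrow> N (- x) = N x"
  using N_scale[of x "-1"] by (simp add: fun_Compl_def)

lemma diff_in: "x \<in> E \<Longrightarrow> y \<in> E \<Longrightarrow> x - y \<in> E"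
  by (metis add_in diff_conv_add_uminus uminus_in)

lemma N_tri_diff: "x \<in> E \<Longrightarrow> y \<in> E \<Longrightarrow> N (x - y) \<le> N x + N y"
  by (metis N_tri N_uminus diff_conv_add_uminus uminus_in)

lemma N_commute: "x \<in> E \<Longrightarrow> y \<in> E \<Longrightarrow> N (x - y) = N (y - x)"
  by (metis N_uminus diff_in minus_diff_eq)

lemma N_abs: "x \<in> E \<Longrightarrow> N (\<lambda>k. \<bar>x k\<bar>) = N x"
  using mono[of x "\<lambda>k. \<bar>x k\<bar>"] mono[of "\<lambda>k. \<bar>x k\<bar>" x] by force

lemma abs_in: "x \<in> E \<Longrightarrow> (\<lambda>k. \<bar>x k\<bar>) \<in> E"
  using mono[of x "\<lambda>k. \<bar>x k\<bar>"] by force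

lemma sum_in: "(\<And>i. i \<in> I \<Longrightarrow> f i \<in> E) \<Longrightarrow> (\<Sum>i\<in>I. f i) \<in> E"
proof (induction I rule: infinite_finite_induct)
  case (infinite A) then show ?case by (simp only: sum.infinite[OF infinite.hyps] zero_in)
next
  case empty then show ?case by (simp only: sum.empty zero_in)
next
  case (insert x F)
  have "f x \<in> E" using insert.prems by blast
  moreover have "sum f F \<in> E" using insert.prems insert.IH by blast
  ultimately show ?case by (simp only: sum.insert[OF insert.hyps] add_in)
qed

lemma N_sum: "(\<And>i. i \<in> I \<Longrightarrow> f i \<in> E) \<Longrightarrow> N (\<Sum>i\<in>I. f i) \<le> (\<Sum>i\<in>I. N (f i))"
proof (induction I rule: infinite_finite_induct)
  case (infinite A) then show ?case by (simp only: sum.infinite[OF infinite.hyps] N_zero order.refl)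
next
  case empty then show ?case by (simp only: sum.empty N_zero order.refl)
next
  case (insert x F)
  then have "N (\<Sum>i\<in>insert x F. f i) \<le> N (f x) + N (\<Sum>i\<in>F. f i)"
    using insert.prems by (simp only: sum.insert[OF insert.hyps]) (intro N_tri sum_in, auto)
  moreover have "N (sum f F) \<le> (\<Sum>i\<in>F. N (f i))" using insert.prems insert.IH by blast
  ultimately show ?case by (simp only: sum.insert[OF insert.hyps])
qed

definition s :: "nat \<Rightarrow> real" where "s k = N (unitv k)"

lemma s_pos: "s k > 0"
proof -
  have "unitv k \<noteq> 0" by (auto simp: unitv_def fun_eq_iff)
  then show ?thesis using units N_zero_iff N_nonneg unfolding s_def
    by (metis less_eq_real_def)
qed

lemma coord_vec_in: "(\<lambda>j. c * unitv k j) \<in> E" using units scale_in by blast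

lemma N_coord_vec: "N (\<lambda>j. c * unitv k j) = \<bar>c\<bar> * s k"
  using units N_scale s_def by simp

lemma coord_bound: "x \<in> E \<Longrightarrow> \<bar>x k\<bar> * s k \<le> N x"
proof -
  assume x: "x \<in> E"
  have "\<bar>x k * unitv k j\<bar> \<le> \<bar>x j\<bar>" for j by (auto simp: unitv_def)
  then have "N (\<lambda>j. x k * unitv k j) \<le> N x" using mono[OF x, of "\<lambda>j. x k * unitv k j"] by blast
  then show ?thesis using N_coord_vec by simp
qed

lemma coord_bound': "x \<in> E \<Longrightarrow> \<bar>x k\<bar> \<le> N x / s k"
  using coord_bound[of x k] s_pos[of k] by (simp add: field_simps)

lemma coord_tendsto:
  assumes "\<And>K. f K \<in> E" "z \<in> E" "(\<lambda>K. N (f K - z)) \<longlonglongrightarrow> 0"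
  shows "(\<lambda>K. f K m) \<longlonglongrightarrow> z m"
proof -
  have "(\<lambda>K. N (f K - z) / s m) \<longlonglongrightarrow> 0"
    using tendsto_divide_zero[OF assms(3)] by simp
  moreover have "norm (f K m - z m) \<le> N (f K - z) / s m" for K
  proof -
    have "\<bar>(f K - z) m\<bar> \<le> N (f K - z) / s m"
      using coord_bound'[OF diff_in[OF assms(1) assms(2)]] .
    then show ?thesis by (simp only: real_norm_def fun_diff_def)
  qed
  ultimately have "(\<lambda>K. f K m - z m) \<longlonglongrightarrow> 0"
    by (intro Lim_null_comparison[of "\<lambda>K. f K m - z m" "\<lambda>K. N (f K - z) / s m"]) (simp_all add: always_eventually)
  then show ?thesis by (simp add: LIM_zero_iff)
qed

end

lemma sum_fun_apply: "(\<Sum>n\<in>A. f n) j = (\<Sum>n\<in>A. f n j)"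
  by (induction A rule: infinite_finite_induct) auto

lemma fekete_bound:
  fixes q :: "nat \<Rightarrow> real"
  assumes pos: "\<And>n. n \<ge> 1 \<Longrightarrow> q n > 0"
    and sub: "\<And>n m. n \<ge> 1 \<Longrightarrow> m \<ge> 1 \<Longrightarrow> q (n+m) \<le> q n * q m"
    and p: "p \<ge> 1" and b: "\<beta> > 0" and qp: "q p \<le> \<beta> ^ p"
  shows "\<exists>K>0. \<forall>n\<ge>1. q n \<le> K * \<beta> ^ n"
proof -
  have qp0: "q p > 0" using pos p by auto
  have key: "q (m*p + r) \<le> q p ^ m * q r" if r: "r \<ge> 1" for m r
  proof (induction m)
    case 0 show ?case by simp
  next
    case (Suc m)
    have "q (Suc m * p + r) = q (p + (m*p + r))" by (simp add: algebra_simps)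
    also have "\<dots> \<le> q p * q (m*p+r)" using sub p r by simp
    also have "\<dots> \<le> q p * (q p ^ m * q r)" using Suc qp0 by (intro mult_left_mono) auto
    finally show ?case by (simp add: algebra_simps)
  qed
  define M where "M = (\<Sum>r\<in>{1..p}. q r)"
  have qrM: "q r \<le> M" if "1 \<le> r" "r \<le> p" for r
    unfolding M_def using that pos by (intro member_le_sum) (auto intro: less_imp_le)
  have M0: "M > 0" using qrM[of p] p qp0 by auto
  define K where "K = M * (1 + (1/\<beta>)^p)"
  have K0: "K > 0" unfolding K_def using M0 b by (intro mult_pos_pos) (auto intro: add_pos_nonneg)
  have "q n \<le> K * \<beta> ^ n" if n: "n \<ge> 1" for n
  proof -
    define m where "m = (n-1) div p"
    define r where "r = (n-1) mod p + 1"
    have "n - 1 = (n-1) div p * p + (n-1) mod p" by simp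
    then have nr: "n = m*p + r" unfolding m_def r_def using n by linarith
    have r1: "r \<ge> 1" and rp: "r \<le> p" unfolding r_def using p
      by (auto simp: Suc_le_eq)
    have "q n \<le> q p ^ m * q r" using key[OF r1] nr by simp
    also have "\<dots> \<le> (\<beta>^p)^m * M"
      using qp qp0 qrM[OF r1 rp] pos[OF r1] b
      by (intro mult_mono power_mono) (auto simp: less_imp_le)
    also have "(\<beta>^p)^m = \<beta>^n * (1/\<beta>)^r"
    proof -
      have "\<beta>^n = \<beta>^(m*p) * \<beta>^r" by (simp add: nr power_add)
      moreover have "(\<beta>^p)^m = \<beta>^(m*p)" by (simp add: power_mult[symmetric] mult.commute)
      ultimately show ?thesis using b by (simp add: power_one_over field_simps)
    qed
    also have "(1/\<beta>)^r \<le> 1 + (1/\<beta>)^p"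
    proof (cases "1/\<beta> \<le> 1")
      case True
      then have "(1/\<beta>)^r \<le> 1" using b by (intro power_le_one) auto
      then show ?thesis using b by (smt (verit) zero_le_power divide_pos_pos)
    next
      case False
      then have "(1/\<beta>)^r \<le> (1/\<beta>)^p" by (intro power_increasing rp) auto
      then show ?thesis by simp
    qed
    then have "\<beta>^n * (1/\<beta>)^r * M \<le> \<beta>^n * (1 + (1/\<beta>)^p) * M"
      using b M0 by (intro mult_right_mono mult_left_mono) auto
    finally show ?thesis unfolding K_def by (simp add: algebra_simps)
  qed
  with K0 show ?thesis by blast
qed

lemma powr_inv_pow: "x > 0 \<Longrightarrow> n > 0 \<Longrightarrow> (x powr (1 / real n)) ^ n = x"
  by (simp add: powr_power powr_powr)

lemma fekete:
  fixes q :: "nat \<Rightarrow> real"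
  assumes pos: "\<And>n. n \<ge> 1 \<Longrightarrow> q n > 0"
    and sub: "\<And>n m. n \<ge> 1 \<Longrightarrow> m \<ge> 1 \<Longrightarrow> q (n+m) \<le> q n * q m"
  shows "(\<lambda>n. q n powr (1 / real n)) \<longlonglongrightarrow> Inf {q n powr (1 / real n) | n. n \<ge> 1}"
proof -
  define S where "S = {q n powr (1 / real n) | n. n \<ge> 1}"
  have Sne: "S \<noteq> {}" unfolding S_def by auto
  have Sbdd: "bdd_below S" unfolding S_def by (rule bdd_belowI[of _ 0]) auto
  have L0: "Inf S \<ge> 0" using Sne by (rule cInf_greatest) (auto simp: S_def)
  have low: "Inf S \<le> q n powr (1 / real n)" if "n \<ge> 1" for n
    using Sbdd that by (intro cInf_lower) (auto simp: S_def)
  show ?thesis unfolding S_def[symmetric]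
  proof (rule order_tendstoI)
    fix a assume "a < Inf S"
    then show "eventually (\<lambda>n. a < q n powr (1 / real n)) sequentially"
      using low by (auto simp: eventually_sequentially intro: less_le_trans)
  next
    fix c assume c: "c > Inf S"
    define \<beta> where "\<beta> = (Inf S + c) / 2"
    have b0: "\<beta> > 0" using L0 c unfolding \<beta>_def by auto
    have "Inf S < \<beta>" using c unfolding \<beta>_def by auto
    then obtain x where "x \<in> S" "x < \<beta>" using cInf_lessD[OF Sne] by blast
    then obtain p where p: "p \<ge> 1" and xp: "q p powr (1 / real p) < \<beta>" unfolding S_def by auto
    have "q p = (q p powr (1 / real p)) ^ p" using pos[OF p] p by (simp add: powr_inv_pow)
    also have "\<dots> \<le> \<beta> ^ p" using xp by (intro power_mono) auto
    finally obtain K where K: "K > 0" "\<And>n. n \<ge> 1 \<Longrightarrow> q n \<le> K * \<beta> ^ n"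
      using fekete_bound[OF pos sub p b0] by blast
    have "(\<lambda>n. root n K) \<longlonglongrightarrow> 1" using LIMSEQ_root_const[OF K(1)] .
    then have "(\<lambda>n. root n K * \<beta>) \<longlonglongrightarrow> 1 * \<beta>" by (intro tendsto_intros)
    moreover have "\<beta> < c" using c unfolding \<beta>_def by auto
    ultimately have ev: "eventually (\<lambda>n. root n K * \<beta> < c) sequentially"
      by (intro order_tendstoD(2)) auto
    have "eventually (\<lambda>n. q n powr (1 / real n) \<le> root n K * \<beta>) sequentially"
      unfolding eventually_sequentially
    proof (intro exI[of _ 1] allI impI)
      fix n :: nat assume n: "n \<ge> 1"
      have "q n powr (1 / real n) \<le> (K * \<beta> ^ n) powr (1 / real n)"
        using pos[OF n] K(2)[OF n] by (intro powr_mono2) auto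
      also have "\<dots> = K powr (1 / real n) * (\<beta> ^ n) powr (1 / real n)"
        using K b0 by (simp add: powr_mult)
      also have "(\<beta> ^ n) powr (1 / real n) = \<beta>"
        using b0 n by (simp add: powr_realpow[symmetric] powr_powr)
      also have "K powr (1 / real n) = root n K" using n K by (simp add: root_powr_inverse)
      finally show "q n powr (1 / real n) \<le> root n K * \<beta>" .
    qed
    with ev show "eventually (\<lambda>n. q n powr (1 / real n) < c) sequentially"
      by eventually_elim auto
  qed
qed

context BSL begin

lemma series_conv:
  assumes f: "\<And>n. f n \<in> E" and sm: "summable (\<lambda>n. N (f n))"
  shows "\<exists>z\<in>E. (\<lambda>K. N ((\<Sum>n<K. f n) - z)) \<longlonglongrightarrow> 0 \<and> N z \<le> (\<Sum>n. N (f n))"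
proof -
  define S where "S K = (\<Sum>n<K. f n)" for K
  have SE: "S K \<in> E" for K unfolding S_def using f by (intro sum_in)
  have Ndiff: "N (S i - S j) \<le> (\<Sum>n\<in>{j..<i}. N (f n))" if "j \<le> i" for i j
  proof -
    have "S i = S j + (\<Sum>n\<in>{j..<i}. f n)" unfolding S_def
      using that by (metis atLeast0LessThan sum.atLeastLessThan_concat zero_le)
    then have "S i - S j = (\<Sum>n\<in>{j..<i}. f n)" by simp
    then show ?thesis using f by (simp add: N_sum)
  qed
  have "\<exists>z\<in>E. (\<lambda>j. N (S j - z)) \<longlonglongrightarrow> 0"
  proof (rule complete[OF SE])
    fix e :: real assume e: "e > 0"
    then obtain M where M: "\<And>m n. m \<ge> M \<Longrightarrow> norm (\<Sum>k\<in>{m..<n}. N (f k)) < e"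
      using sm unfolding summable_Cauchy by blast
    have "N (S i - S j) < e" if "i \<ge> M" "j \<ge> M" for i j
    proof (cases "j \<le> i")
      case True
      then show ?thesis using Ndiff[OF True] M[of j i] that by simp
    next
      case False
      then have "N (S j - S i) < e" using Ndiff[of i j] M[of i j] that by simp
      then show ?thesis using N_commute SE by metis
    qed
    then show "\<exists>M. \<forall>i\<ge>M. \<forall>j\<ge>M. N (S i - S j) < e" by blast
  qed
  then obtain z where z: "z \<in> E" "(\<lambda>j. N (S j - z)) \<longlonglongrightarrow> 0" by blast
  have bound: "N z \<le> N (S K - z) + (\<Sum>n. N (f n))" for K
  proof -
    have "N (S K - (S K - z)) \<le> N (S K) + N (S K - z)"
      using N_tri_diff[OF SE diff_in[OF SE z(1)], of K K] .
    then have "N z \<le> N (S K) + N (S K - z)" by simp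
    moreover have "N (S K) \<le> (\<Sum>n. N (f n))"
    proof -
      have "N (S K) \<le> (\<Sum>n<K. N (f n))" unfolding S_def using f by (simp add: N_sum)
      also have "\<dots> \<le> (\<Sum>n. N (f n))" using sm f N_nonneg by (intro sum_le_suminf) auto
      finally show ?thesis .
    qed
    ultimately show ?thesis by linarith
  qed
  have "(\<lambda>K. N (S K - z) + (\<Sum>n. N (f n))) \<longlonglongrightarrow> 0 + (\<Sum>n. N (f n))"
    by (intro tendsto_intros z(2))
  then have "N z \<le> 0 + (\<Sum>n. N (f n))"
    by (rule LIMSEQ_le_const) (use bound in auto)
  then show ?thesis using z unfolding S_def by auto
qed

lemma partial_le_limit:
  assumes f: "\<And>n. f n \<in> E" and fpos: "\<And>n j. f n j \<ge> 0" and z: "z \<in> E"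
    and conv: "(\<lambda>K. N ((\<Sum>n<K. f n) - z)) \<longlonglongrightarrow> 0"
  shows "(\<Sum>n<K. f n j) \<le> z j" and "(\<lambda>K. \<Sum>n<K. f n j) \<longlonglongrightarrow> z j"
proof -
  have SE: "(\<Sum>n<K. f n) \<in> E" for K using f by (intro sum_in)
  have c: "(\<lambda>K. (\<Sum>n<K. f n) j) \<longlonglongrightarrow> z j" by (rule coord_tendsto[OF SE z conv])
  then show c': "(\<lambda>K. \<Sum>n<K. f n j) \<longlonglongrightarrow> z j" by (simp add: sum_fun_apply)
  have "incseq (\<lambda>K. \<Sum>n<K. f n j)"
    by (rule incseq_SucI) (simp add: fpos)
  then show "(\<Sum>n<K. f n j) \<le> z j" using incseq_le c' by blast
qed

end

lemma tau_zero_vec: "tau n 0 = 0"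
  by (auto simp: tau_def fun_eq_iff)

lemma tau_int0: "tau (int 0) x = x"
  by (auto simp: tau_def fun_eq_iff)

lemma tau_add_pos': "tau (int n + int m) x = tau (int n) (tau (int m) x)"
  by (metis of_nat_add tau_add_pos)

lemma tau_add_neg': "tau (- int n - int m) x = tau (- int n) (tau (- int m) x)"
  by (metis of_nat_add tau_add_neg minus_add_distrib diff_conv_add_uminus)

locale BSLS = BSL +
  assumes shifts: "\<forall>n::int. bounded_on E N (tau n)"
begin

lemma tau_in: "x \<in> E \<Longrightarrow> tau n x \<in> E"
  using shifts unfolding bounded_on_def by blast

definition OS :: "int \<Rightarrow> real set" where
  "OS n = {N (tau n x) | x. x \<in> E \<and> N x \<le> 1}"

lemma OS_ne: "OS n \<noteq> {}" unfolding OS_def using zero_in N_zero by force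

lemma OS_bdd: "bdd_above (OS n)"
proof -
  obtain C where C: "\<And>x. x \<in> E \<Longrightarrow> N (tau n x) \<le> C * N x"
    using shifts unfolding bounded_on_def by blast
  have "y \<le> max C 0" if y: "y \<in> OS n" for y
  proof -
    obtain x where x: "x \<in> E" "N x \<le> 1" "y = N (tau n x)" using y unfolding OS_def by blast
    have "C * N x \<le> max C 0 * N x" using N_nonneg[OF x(1)] by (intro mult_right_mono) auto
    also have "\<dots> \<le> max C 0 * 1" using x(2) by (intro mult_left_mono) auto
    finally show ?thesis using C[OF x(1)] x(3) by simp
  qed
  then show ?thesis by (rule bdd_aboveI)
qed

lemma opnorm_eq: "opnorm E N (tau n) = Sup (OS n)"
  unfolding opnorm_def OS_def by simp

lemma opnorm_nonneg: "opnorm E N (tau n) \<ge> 0"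
proof -
  have "N (tau n 0) = 0" by (simp only: tau_zero_vec N_zero)
  then have "0 \<in> OS n" unfolding OS_def mem_Collect_eq using zero_in N_zero
    by (intro exI[of _ 0]) simp
  then show ?thesis unfolding opnorm_eq using OS_bdd[of n] by (simp add: cSup_upper)
qed

lemma opnorm_bound: "x \<in> E \<Longrightarrow> N (tau n x) \<le> opnorm E N (tau n) * N x"
proof -
  assume x: "x \<in> E"
  show ?thesis
  proof (cases "N x = 0")
    case True
    then have "x = 0" using N_zero_iff x by blast
    then show ?thesis by (simp add: tau_zero_vec N_zero)
  next
    case False
    then have Nx: "N x > 0" using N_nonneg[OF x] by auto
    define y where "y = (\<lambda>k. (1 / N x) * x k)"
    have yE: "y \<in> E" unfolding y_def using scale_in x by blast
    have "N y = \<bar>1 / N x\<bar> * N x" unfolding y_def by (rule N_scale[OF x])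
    then have Ny: "N y = 1" using Nx by simp
    have "N (tau n y) = \<bar>1 / N x\<bar> * N (tau n x)"
      unfolding y_def tau_scale by (rule N_scale[OF tau_in[OF x]])
    then have "N (tau n y) = (1 / N x) * N (tau n x)" using Nx by simp
    moreover have "N (tau n y) \<le> Sup (OS n)"
      using yE Ny OS_bdd by (intro cSup_upper) (auto simp: OS_def)
    ultimately have "N (tau n x) / N x \<le> opnorm E N (tau n)" unfolding opnorm_eq by simp
    then show ?thesis using Nx by (simp add: field_simps)
  qed
qed

lemma opnorm_submult:
  assumes comp: "\<And>x. tau c x = tau a (tau b x)"
  shows "opnorm E N (tau c) \<le> opnorm E N (tau a) * opnorm E N (tau b)"
  unfolding opnorm_eq[of c]
proof (rule cSup_least[OF OS_ne])
  fix y assume "y \<in> OS c"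
  then obtain x where x: "x \<in> E" "N x \<le> 1" "y = N (tau c x)" unfolding OS_def by blast
  have "y = N (tau a (tau b x))" using x comp by simp
  also have "\<dots> \<le> opnorm E N (tau a) * N (tau b x)" using opnorm_bound tau_in x by blast
  also have "\<dots> \<le> opnorm E N (tau a) * (opnorm E N (tau b) * N x)"
    using opnorm_bound[OF x(1)] opnorm_nonneg by (intro mult_left_mono) auto
  also have "\<dots> \<le> opnorm E N (tau a) * (opnorm E N (tau b) * 1)"
    using x(2) opnorm_nonneg by (intro mult_left_mono) auto
  finally show "y \<le> opnorm E N (tau a) * opnorm E N (tau b)" by simp
qed

lemma s_shift_pos: "s (j + n) \<le> opnorm E N (tau (int n)) * s j"
  using opnorm_bound[OF spec[OF units, of j], of "int n"] unfolding s_def tau_unit_pos .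

lemma s_shift_neg: "s j \<le> opnorm E N (tau (- int n)) * s (j + n)"
  using opnorm_bound[OF spec[OF units, of "j+n"], of "- int n"] unfolding s_def tau_unit_neg .

lemma opnorm_pos_pos: "opnorm E N (tau (int n)) > 0"
  using s_shift_pos[of 0 n] s_pos[of n] s_pos[of 0] opnorm_nonneg[of "int n"]
  by (metis add_0 less_eq_real_def mult_eq_0_iff order_less_le_trans)

lemma opnorm_neg_pos: "opnorm E N (tau (- int n)) > 0"
  using s_shift_neg[of 0 n] s_pos[of n] s_pos[of 0] opnorm_nonneg[of "- int n"]
  by (metis add_0 less_eq_real_def mult_eq_0_iff order_less_le_trans)

lemma k_plus_Inf:
  "(\<lambda>n. opnorm E N (tau (int n)) powr (1 / real n)) \<longlonglongrightarrow>
     Inf {opnorm E N (tau (int n)) powr (1 / real n) | n. n \<ge> 1}"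
  by (rule fekete[where q = "\<lambda>n. opnorm E N (tau (int n))"])
     (auto simp: opnorm_pos_pos intro!: opnorm_submult tau_add_pos')

lemma k_minus_Inf:
  "(\<lambda>n. opnorm E N (tau (- int n)) powr (1 / real n)) \<longlonglongrightarrow>
     Inf {opnorm E N (tau (- int n)) powr (1 / real n) | n. n \<ge> 1}"
  by (rule fekete[where q = "\<lambda>n. opnorm E N (tau (- int n))"])
     (auto simp: opnorm_neg_pos intro!: opnorm_submult tau_add_neg')

lemma geom_from_Inf:
  fixes q :: "nat \<Rightarrow> real"
  assumes pos: "\<And>n. n \<ge> 1 \<Longrightarrow> q n > 0"
    and sub: "\<And>n m. n \<ge> 1 \<Longrightarrow> m \<ge> 1 \<Longrightarrow> q (n+m) \<le> q n * q m"
    and lt: "Inf {q n powr (1 / real n) | n. n \<ge> 1} < \<rho>"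
  shows "\<exists>K>0. \<forall>n\<ge>1. q n \<le> K * \<rho> ^ n"
proof -
  define S where "S = {q n powr (1 / real n) | n. n \<ge> 1}"
  have Sne: "S \<noteq> {}" unfolding S_def by auto
  have L0: "Inf S \<ge> 0" using Sne by (rule cInf_greatest) (auto simp: S_def)
  obtain x where "x \<in> S" "x < \<rho>" using cInf_lessD[OF Sne] lt unfolding S_def by blast
  then obtain p where p: "p \<ge> 1" and xp: "q p powr (1 / real p) < \<rho>" unfolding S_def by auto
  have r0: "\<rho> > 0" using L0 lt unfolding S_def by linarith
  have "q p = (q p powr (1 / real p)) ^ p" using pos[OF p] p by (simp add: powr_inv_pow)
  also have "\<dots> \<le> \<rho> ^ p" using xp by (intro power_mono) auto
  finally show ?thesis using fekete_bound[OF pos sub p r0] by blast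
qed

lemma shift_pos_geom:
  assumes "k_plus E N < \<rho>"
  shows "\<exists>K\<ge>1. \<forall>n. \<forall>x\<in>E. N (tau (int n) x) \<le> K * \<rho> ^ n * N x"
proof -
  have kp: "k_plus E N = Inf {opnorm E N (tau (int n)) powr (1 / real n) | n. n \<ge> 1}"
    unfolding k_plus_def using k_plus_Inf by (rule limI)
  obtain K where K: "K > 0" "\<And>n. n \<ge> 1 \<Longrightarrow> opnorm E N (tau (int n)) \<le> K * \<rho> ^ n"
    using geom_from_Inf[where q = "\<lambda>n. opnorm E N (tau (int n))"] assms kp
    by (auto simp: opnorm_pos_pos intro!: opnorm_submult tau_add_pos')
  have r0: "\<rho> > 0"
  proof -
    have "opnorm E N (tau (int 1)) \<le> K * \<rho>" using K(2)[of 1] by simp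
    then show ?thesis using opnorm_pos_pos[of 1] K(1) by (smt (verit) mult_nonneg_nonpos)
  qed
  have "N (tau (int n) x) \<le> max K 1 * \<rho> ^ n * N x" if x: "x \<in> E" for n x
  proof (cases "n = 0")
    case True
    have "N x \<le> max K 1 * N x" using N_nonneg[OF x] by (simp add: mult_le_cancel_right1)
    then show ?thesis using True tau_int0[of x] by simp
  next
    case False
    then have "N (tau (int n) x) \<le> K * \<rho> ^ n * N x"
      using opnorm_bound[OF x, of "int n"] K(2)[of n] N_nonneg[OF x]
      by (smt (verit) less_one mult_right_mono not_le)
    also have "\<dots> \<le> max K 1 * \<rho> ^ n * N x"
      using N_nonneg[OF x] r0 by (intro mult_right_mono) auto
    finally show ?thesis .
  qed
  then show ?thesis by (intro exI[of _ "max K 1"]) auto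
qed

lemma shift_neg_geom:
  assumes "k_minus E N < \<rho>"
  shows "\<exists>K\<ge>1. \<forall>n. \<forall>x\<in>E. N (tau (- int n) x) \<le> K * \<rho> ^ n * N x"
proof -
  have kp: "k_minus E N = Inf {opnorm E N (tau (- int n)) powr (1 / real n) | n. n \<ge> 1}"
    unfolding k_minus_def using k_minus_Inf by (rule limI)
  obtain K where K: "K > 0" "\<And>n. n \<ge> 1 \<Longrightarrow> opnorm E N (tau (- int n)) \<le> K * \<rho> ^ n"
    using geom_from_Inf[where q = "\<lambda>n. opnorm E N (tau (- int n))"] assms kp
    by (auto simp: opnorm_neg_pos intro!: opnorm_submult tau_add_neg')
  have r0: "\<rho> > 0"
  proof -
    have "opnorm E N (tau (- int 1)) \<le> K * \<rho>" using K(2)[of 1] by simp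
    then show ?thesis using opnorm_neg_pos[of 1] K(1) by (smt (verit) mult_nonneg_nonpos)
  qed
  have "N (tau (- int n) x) \<le> max K 1 * \<rho> ^ n * N x" if x: "x \<in> E" for n x
  proof (cases "n = 0")
    case True
    have "N x \<le> max K 1 * N x" using N_nonneg[OF x] by (simp add: mult_le_cancel_right1)
    then show ?thesis using True tau_int0[of x] by simp
  next
    case False
    then have "N (tau (- int n) x) \<le> K * \<rho> ^ n * N x"
      using opnorm_bound[OF x, of "- int n"] K(2)[of n] N_nonneg[OF x]
      by (smt (verit) less_one mult_right_mono not_le)
    also have "\<dots> \<le> max K 1 * \<rho> ^ n * N x"
      using N_nonneg[OF x] r0 by (intro mult_right_mono) auto
    finally show ?thesis .
  qed
  then show ?thesis by (intro exI[of _ "max K 1"]) auto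
qed

end

lemma clamp_lip: "h \<ge> 0 \<Longrightarrow> \<bar>max 0 (min 1 (min u v)) - max 0 (min 1 (min (u + h) (v - h)))\<bar> \<le> (h::real)"
  by (simp add: min_def max_def abs_if)

lemma sum_unitv: "(\<Sum>k\<in>{a..<b}. c k * unitv k j) = (if a \<le> j \<and> j < b then c j else 0)"
proof -
  have "(\<Sum>k\<in>{a..<b}. c k * unitv k j) = (\<Sum>k\<in>{a..<b}. if j = k then c k else 0)"
    by (intro sum.cong) (auto simp: unitv_def)
  also have "\<dots> = (if a \<le> j \<and> j < b then c j else 0)"
    using sum.delta[of "{a..<b}" j c] by (simp add: eq_commute)
  finally show ?thesis .
qed

lemma hump:
  fixes t :: "nat \<Rightarrow> real"
  assumes tpos: "\<And>k. t k > 0"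
    and r: "\<And>m. \<exists>j. t j < 2 * t (j + m)"
    and i: "\<And>m. \<exists>j. t (j + m) < 2 * t j"
  shows "\<exists>a p b. a + d \<le> p \<and> p + d \<le> b \<and> t a \<le> 2 * t p \<and> t b \<le> 2 * t p"
proof (rule ccontr)
  assume nh: "\<not> ?thesis"
  then have nh': "\<And>a p b. a + d \<le> p \<Longrightarrow> p + d \<le> b \<Longrightarrow> t a > 2 * t p \<or> t b > 2 * t p"
    by (meson not_le)
  have d0: "d \<noteq> 0"
  proof
    assume "d = 0"
    then show False using nh'[of 0 0 0] tpos[of 0] by auto
  qed
  define P where "P p = (\<forall>a. a + d \<le> p \<longrightarrow> t a > 2 * t p)" for p
  define F where "F p = (\<forall>b. p + d \<le> b \<longrightarrow> t b > 2 * t p)" for p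
  have PF: "P p \<or> F p" for p
    unfolding P_def F_def using nh' by (meson not_le)
  show False
  proof (cases "\<exists>k0. F k0")
    case True
    then obtain k0 where Fk0: "F k0" by blast
    define K where "K = k0 + d"
    have FK: "F k" if "k \<ge> K" for k
    proof (rule ccontr)
      assume "\<not> F k"
      then have "P k" using PF by blast
      then have "t k0 > 2 * t k" unfolding P_def using that K_def by auto
      moreover have "t k > 2 * t k0" using Fk0 that unfolding F_def K_def by auto
      ultimately show False using tpos[of k0] by linarith
    qed
    have growth: "\<And>j b. K \<le> j \<Longrightarrow> j + Suc q * d \<le> b \<Longrightarrow> 2 ^ Suc q * t j \<le> t b" for q
    proof (induction q)
      case 0
      then show ?case using FK[of j] unfolding F_def by force
    next
      case (Suc q)
      have "2 ^ Suc q * t (j + d) \<le> t b"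
        using Suc.IH[of "j + d" b] Suc.prems by (simp add: algebra_simps)
      moreover have "t (j + d) > 2 * t j" using FK[OF Suc.prems(1)] unfolding F_def by auto
      then have "2 ^ Suc q * (2 * t j) \<le> 2 ^ Suc q * t (j + d)"
        by (intro mult_left_mono) auto
      ultimately show ?case by (simp only: power_Suc[of 2 "Suc q"])
    qed
    define Sm where "Sm = (\<Sum>i<K. t i)"
    obtain Q where Q: "Sm / t K < 2 ^ Q" using real_arch_pow[of 2 "Sm / t K"] by auto
    then have Q': "Sm < 2 ^ Q * t K" using tpos[of K] by (simp add: field_simps)
    define m where "m = K + Suc Q * d"
    obtain j where j: "t (j + m) < 2 * t j" using i by blast
    show False
    proof (cases "j \<ge> K")
      case True
      then have "t (j + m) > 2 * t j" using FK[OF True] d0 unfolding F_def m_def by auto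
      then show False using j by linarith
    next
      case False
      then have "t j \<le> Sm" unfolding Sm_def using tpos by (intro member_le_sum) (auto intro: less_imp_le)
      moreover have "2 ^ Suc Q * t K \<le> t (j + m)" by (rule growth) (auto simp: m_def)
      ultimately show False using j Q' by simp
    qed
  next
    case False
    then have allP: "P p" for p using PF by blast
    obtain j where j: "t j < 2 * t (j + d)" using r by blast
    have "t j > 2 * t (j + d)" using allP[of "j + d"] unfolding P_def by auto
    then show False using j by linarith
  qed
qed

context BSLS begin

lemma Tlam_in: "x \<in> E \<Longrightarrow> Tlam l x \<in> E"
proof -
  assume x: "x \<in> E"
  have eq: "Tlam l x = tau 1 x + (\<lambda>k. (- l) * x k)" by (auto simp: Tlam_def fun_eq_iff)
  show ?thesis unfolding eq by (rule add_in[OF tau_in[OF x] scale_in[OF x]])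
qed

lemma Tlam_bound: "x \<in> E \<Longrightarrow> N (Tlam l x) \<le> (opnorm E N (tau 1) + \<bar>l\<bar>) * N x"
proof -
  assume x: "x \<in> E"
  have eq: "Tlam l x = tau 1 x + (\<lambda>k. (- l) * x k)" by (auto simp: Tlam_def fun_eq_iff)
  have "N (Tlam l x) \<le> N (tau 1 x) + N (\<lambda>k. (- l) * x k)"
    unfolding eq by (rule N_tri[OF tau_in[OF x] scale_in[OF x]])
  also have "\<dots> \<le> opnorm E N (tau 1) * N x + \<bar>l\<bar> * N x"
    using opnorm_bound[OF x, of 1] N_scale[OF x, of "-l"] by simp
  finally show ?thesis by (simp add: algebra_simps)
qed

lemma bb_closed:
  assumes c: "c > 0" and bb: "\<forall>x\<in>E. c * N x \<le> N (Tlam l x)"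
  shows "N_closed E N (Tlam l ` E)"
  unfolding N_closed_def
proof (intro allI impI, elim conjE)
  fix f z assume fR: "\<forall>j. f j \<in> Tlam l ` E" and z: "z \<in> E" and conv: "(\<lambda>j. N (f j - z)) \<longlonglongrightarrow> 0"
  have "\<forall>j. \<exists>y. y \<in> E \<and> f j = Tlam l y" using fR by blast
  then obtain x where x0: "\<forall>j. x j \<in> E \<and> f j = Tlam l (x j)"
    using choice[of "\<lambda>j y. y \<in> E \<and> f j = Tlam l y"] by blast
  then have x: "\<And>j. x j \<in> E" "\<And>j. f j = Tlam l (x j)" by auto
  have fE: "f j \<in> E" for j using x Tlam_in by simp
  have "\<exists>w\<in>E. (\<lambda>j. N (x j - w)) \<longlonglongrightarrow> 0"
  proof (rule complete[OF x(1)])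
    fix e :: real assume e: "e > 0"
    have "eventually (\<lambda>j. N (f j - z) < c * e / 2) sequentially"
      using conv c e by (intro order_tendstoD(2)) auto
    then obtain M where M: "\<And>j. j \<ge> M \<Longrightarrow> N (f j - z) < c * e / 2"
      unfolding eventually_sequentially by blast
    have "N (x i - x j) < e" if "i \<ge> M" "j \<ge> M" for i j
    proof -
      have "c * N (x i - x j) \<le> N (Tlam l (x i - x j))" using bb diff_in x(1) by blast
      also have "Tlam l (x i - x j) = (f i - z) - (f j - z)" by (simp add: Tlam_diff x(2))
      also have "N ((f i - z) - (f j - z)) \<le> N (f i - z) + N (f j - z)"
        using diff_in fE z by (intro N_tri_diff) auto
      also have "\<dots> < c * e" using M[OF that(1)] M[OF that(2)] by simp
      finally have "c * N (x i - x j) < c * e" .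
      then show ?thesis using c by (metis mult_less_cancel_left_pos)
    qed
    then show "\<exists>M. \<forall>i\<ge>M. \<forall>j\<ge>M. N (x i - x j) < e" by blast
  qed
  then obtain w where w: "w \<in> E" "(\<lambda>j. N (x j - w)) \<longlonglongrightarrow> 0" by blast
  define C where "C = opnorm E N (tau 1) + \<bar>l\<bar>"
  have "N (Tlam l w - z) \<le> C * N (x j - w) + N (f j - z)" for j
  proof -
    have "Tlam l w - z = Tlam l (w - x j) + (f j - z)" by (simp add: Tlam_diff x(2))
    moreover have "N (Tlam l (w - x j) + (f j - z)) \<le> N (Tlam l (w - x j)) + N (f j - z)"
      using N_tri[OF Tlam_in[OF diff_in[OF w(1) x(1)]] diff_in[OF fE z]] .
    ultimately have "N (Tlam l w - z) \<le> N (Tlam l (w - x j)) + N (f j - z)" by (simp only:)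
    moreover have "N (Tlam l (w - x j)) \<le> C * N (w - x j)" unfolding C_def
      using Tlam_bound diff_in w(1) x(1) by blast
    moreover have "N (w - x j) = N (x j - w)" using N_commute w(1) x(1) by blast
    ultimately show ?thesis by (metis add_right_mono order_trans)
  qed
  moreover have "(\<lambda>j. C * N (x j - w) + N (f j - z)) \<longlonglongrightarrow> C * 0 + 0"
    by (intro tendsto_intros w(2) conv)
  ultimately have "N (Tlam l w - z) \<le> C * 0 + 0"
    by (intro LIMSEQ_le_const[where X = "\<lambda>j. C * N (x j - w) + N (f j - z)"]) auto
  moreover have TE: "Tlam l w - z \<in> E" using diff_in[OF Tlam_in[OF w(1)] z] .
  ultimately have "N (Tlam l w - z) = 0" using N_nonneg[OF TE] by linarith
  then have "Tlam l w - z = 0" using N_zero_iff[OF TE] by blast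
  then show "z \<in> Tlam l ` E" using w(1) by auto
qed

lemma not_closed:
  assumes l: "l > 0"
    and ae: "\<And>c. c > 0 \<Longrightarrow> \<exists>x\<in>E. (\<forall>k. 0 \<le> x k) \<and> N (Tlam l x) < c * N x"
  shows "\<not> N_closed E N (Tlam l ` E)"
proof
  assume cl: "N_closed E N (Tlam l ` E)"
  have "\<forall>k. \<exists>x. x \<in> E \<and> (\<forall>j. 0 \<le> x j) \<and> N (Tlam l x) < (1/4)^k * N x"
    using ae by (metis zero_less_divide_1_iff zero_less_numeral zero_less_power)
  then obtain X where X: "\<And>k. X k \<in> E" "\<And>k j. 0 \<le> X k j" "\<And>k. N (Tlam l (X k)) < (1/4)^k * N (X k)"
    by metis
  have NX: "N (X k) > 0" for k
    using X(3)[of k] N_nonneg[OF Tlam_in[OF X(1)], of l k] by (smt (verit) zero_le_power zero_less_divide_1_iff mult_nonneg_nonpos)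
  define y where "y k = (\<lambda>j. (2^k / N (X k)) * X k j)" for k
  have yE: "y k \<in> E" for k unfolding y_def using scale_in X(1) by blast
  have ypos: "0 \<le> y k j" for k j unfolding y_def
    by (intro mult_nonneg_nonneg divide_nonneg_pos) (use X(2) NX in auto)
  have Ny: "N (y k) = 2^k" for k
  proof -
    have "N (y k) = \<bar>2^k / N (X k)\<bar> * N (X k)" unfolding y_def by (rule N_scale[OF X(1)])
    then show ?thesis using NX[of k] by simp
  qed
  have NTy: "N (Tlam l (y k)) \<le> (1/2)^k" for k
  proof -
    have "N (Tlam l (y k)) = \<bar>2^k / N (X k)\<bar> * N (Tlam l (X k))"
      unfolding y_def Tlam_scale by (rule N_scale[OF Tlam_in[OF X(1)]])
    also have "\<dots> = (2^k / N (X k)) * N (Tlam l (X k))" using NX[of k] by simp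
    also have "\<dots> \<le> (2^k / N (X k)) * ((1/4)^k * N (X k))"
      using NX[of k] X(3)[of k] by (intro mult_left_mono) auto
    also have "\<dots> = (1/2)^k" using NX[of k] by (simp add: field_simps power_divide flip: power_mult_distrib)
    finally show ?thesis .
  qed
  have sm: "summable (\<lambda>k. N (Tlam l (y k)))"
    by (rule summable_comparison_test'[where g = "\<lambda>k. (1/2)^k" and N = 0])
       (use NTy N_nonneg Tlam_in yE in auto)
  obtain z where z: "z \<in> E" "(\<lambda>K. N ((\<Sum>k<K. Tlam l (y k)) - z)) \<longlonglongrightarrow> 0"
    using series_conv[of "\<lambda>k. Tlam l (y k)"] sm Tlam_in yE by blast
  define Y where "Y K = (\<Sum>k<K. y k)" for K
  have YE: "Y K \<in> E" for K unfolding Y_def using yE by (intro sum_in)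
  have SY: "(\<Sum>k<K. Tlam l (y k)) = Tlam l (Y K)" for K unfolding Y_def by (simp add: Tlam_sum)
  have conv': "(\<lambda>K. N (Tlam l (Y K) - z)) \<longlonglongrightarrow> 0" using z(2) unfolding SY .
  have imgs: "\<forall>j. Tlam l (Y j) \<in> Tlam l ` E" using YE by blast
  have "z \<in> Tlam l ` E"
    using cl[unfolded N_closed_def, rule_format, of "\<lambda>K. Tlam l (Y K)" z] conv' z(1) imgs by blast
  then obtain w where w: "w \<in> E" "z = Tlam l w" by blast
  have cz: "(\<lambda>K. Tlam l (Y K) m) \<longlonglongrightarrow> z m" for m
    using coord_tendsto[of "\<lambda>K. Tlam l (Y K)" z m] z SY Tlam_in YE by simp
  have "(\<lambda>K. Tinv l (Tlam l (Y K)) m) \<longlonglongrightarrow> Tinv l z m" for m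
    by (rule Tinv_tendsto) (rule cz)
  then have cY: "(\<lambda>K. Y K m) \<longlonglongrightarrow> w m" for m
    using l w(2) by (simp add: Tinv_Tlam)
  have Yle: "Y K m \<le> w m" for K m
  proof -
    have "incseq (\<lambda>K. Y K m)"
      by (rule incseq_SucI) (simp add: Y_def sum_fun_apply ypos)
    then show ?thesis using incseq_le cY by blast
  qed
  have Ypos: "0 \<le> Y K m" for K m unfolding Y_def sum_fun_apply by (intro sum_nonneg) (simp add: ypos)
  have "N (y K) \<le> N w" for K
  proof -
    have "\<bar>y K m\<bar> \<le> \<bar>w m\<bar>" for m
    proof -
      have "y K m \<le> Y (Suc K) m" unfolding Y_def sum_fun_apply using ypos
        by (simp add: sum_nonneg)
      then show ?thesis using Yle[of "Suc K" m] ypos[of K m] by simp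
    qed
    then show ?thesis using mono[OF w(1)] by blast
  qed
  then have "2^K \<le> N w" for K using Ny by simp
  moreover obtain K where "N w < 2^K" using real_arch_pow[of 2 "N w"] by auto
  ultimately show False by (meson not_le)
qed

end

context BSLS begin

lemma approx_eig:
  assumes l: "l > 0" and c: "c > 0"
    and r: "\<And>m. \<exists>j. s j / l^j < 2 * (s (j+m) / l^(j+m))"
    and i: "\<And>m. \<exists>j. s (j+m) / l^(j+m) < 2 * (s j / l^j)"
  shows "\<exists>x\<in>E. (\<forall>k. 0 \<le> x k) \<and> N (Tlam l x) < c * N x"
proof (rule ccontr)
  assume "\<not> ?thesis"
  then have bb: "\<And>x. x \<in> E \<Longrightarrow> (\<forall>k. 0 \<le> x k) \<Longrightarrow> c * N x \<le> N (Tlam l x)"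
    by (meson not_le)
  define t where "t k = s k / l^k" for k
  have tpos: "t k > 0" for k unfolding t_def using s_pos l by simp
  obtain n0 :: nat where n0: "4 * l^2 / c^2 < real n0" using reals_Archimedean2 by blast
  define n where "n = Suc n0"
  have n1: "n \<ge> 1" and nr: "4 * l^2 / c^2 < real n" using n0 unfolding n_def by auto
  have npos: "real n > 0" using n1 by simp
  obtain a p b where hp: "a + Suc n \<le> p" "p + Suc n \<le> b" "t a \<le> 2 * t p" "t b \<le> 2 * t p"
    using hump[of t "Suc n", OF tpos] r i unfolding t_def by blast
  have ab: "a < b" "0 < b" using hp by auto
  define H where "H = (\<lambda>j. if a \<le> j \<and> j < b then 1 / l^j else 0)"
  have Hsum: "H = (\<Sum>k\<in>{a..<b}. (\<lambda>j. (1 / l^k) * unitv k j))"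
  proof
    fix j
    have "(\<Sum>k\<in>{a..<b}. (\<lambda>j. (1 / l^k) * unitv k j)) j = (\<Sum>k\<in>{a..<b}. (1 / l^k) * unitv k j)"
      by (rule sum_fun_apply)
    also have "\<dots> = H j" unfolding H_def by (rule sum_unitv)
    finally show "H j = (\<Sum>k\<in>{a..<b}. (\<lambda>j. (1 / l^k) * unitv k j)) j" by simp
  qed
  have HE: "H \<in> E" unfolding Hsum by (intro sum_in coord_vec_in)
  have Hpos: "0 \<le> H k" for k unfolding H_def using l by auto
  have TH: "Tlam l H = (\<lambda>j. (- l / l^a) * unitv a j) + (\<lambda>j. (l / l^b) * unitv b j)"
  proof
    fix j
    show "Tlam l H j = ((\<lambda>j. (- l / l^a) * unitv a j) + (\<lambda>j. (l / l^b) * unitv b j)) j"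
    proof (cases j)
      case 0
      then show ?thesis using ab l by (auto simp: Tlam_0 H_def unitv_def)
    next
      case (Suc m)
      then show ?thesis using ab l by (auto simp: Tlam_Suc H_def unitv_def)
    qed
  qed
  have NTH: "N (Tlam l H) \<le> l * (t a + t b)"
  proof -
    have "N (Tlam l H) \<le> N (\<lambda>j. (- l / l^a) * unitv a j) + N (\<lambda>j. (l / l^b) * unitv b j)"
      unfolding TH by (intro N_tri coord_vec_in)
    also have "\<dots> = l * (t a + t b)" unfolding N_coord_vec t_def using l
      by (simp add: algebra_simps)
    finally show ?thesis .
  qed
  have cH: "c * N H \<le> 4 * l * t p"
  proof -
    have "c * N H \<le> l * (t a + t b)" using bb[OF HE] Hpos NTH by (meson order_trans)
    also have "\<dots> \<le> l * (4 * t p)" using hp l by (intro mult_left_mono) auto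
    finally show ?thesis by simp
  qed
  define cl where "cl y = max 0 (min 1 (min ((y + 1 - real a) / n) ((real b - 1 - y) / n)))" for y :: real
  have cl01: "0 \<le> cl y" "cl y \<le> 1" for y unfolding cl_def by auto
  have cl0: "cl y = 0" if "y + 1 - real a \<le> 0 \<or> real b - 1 - y \<le> 0" for y
  proof -
    have "min ((y + 1 - real a) / n) ((real b - 1 - y) / n) \<le> 0"
      using that npos by (auto simp: divide_nonpos_pos min_le_iff_disj)
    then show ?thesis unfolding cl_def by auto
  qed
  have lip: "\<bar>cl y - cl (y + 1)\<bar> \<le> 1 / n" for y
  proof -
    have "cl (y + 1) = max 0 (min 1 (min ((y + 1 - real a) / n + 1 / n) ((real b - 1 - y) / n - 1 / n)))"
      unfolding cl_def by (simp add: add_divide_distrib diff_divide_distrib algebra_simps)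
    then show ?thesis unfolding cl_def[of y] using clamp_lip[of "1 / n"] npos by simp
  qed
  define x where "x = (\<lambda>k. cl (real k) / l^k)"
  have xpos: "0 \<le> x k" for k unfolding x_def using cl01 l by simp
  have xH: "\<bar>x k\<bar> \<le> \<bar>H k\<bar>" for k
  proof (cases "a \<le> k \<and> k < b")
    case True then show ?thesis unfolding x_def H_def using cl01 l by (simp add: divide_right_mono)
  next
    case False
    then have "cl (real k) = 0" by (intro cl0) auto
    then show ?thesis unfolding x_def H_def by simp
  qed
  have xE: "x \<in> E" using mono[OF HE] xH by blast
  have Tx: "\<bar>Tlam l x k\<bar> \<le> \<bar>(l / n) * H k\<bar>" for k
  proof (cases k)
    case 0
    show ?thesis
    proof (cases "a = 0")
      case True
      have "cl 0 \<le> 1 / n" unfolding cl_def using True by (auto simp: min_le_iff_disj)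
      then have "l * cl 0 \<le> l * (1 / n)" using l by (intro mult_left_mono) auto
      then have "\<bar>Tlam l x 0\<bar> \<le> l / n" using l cl01[of 0] unfolding x_def by (simp add: Tlam_0)
      then show ?thesis using 0 True ab l npos unfolding H_def by simp
    next
      case False
      then have "cl 0 = 0" by (intro cl0) auto
      then show ?thesis using 0 unfolding x_def by (simp add: Tlam_0)
    qed
  next
    case (Suc m)
    have Tm: "Tlam l x (Suc m) = (cl (real m) - cl (real m + 1)) / l^m"
      unfolding x_def Tlam_Suc using l by (simp add: field_simps)
    show ?thesis
    proof (cases "a \<le> Suc m \<and> Suc m < b")
      case True
      have "\<bar>(cl (real m) - cl (real m + 1)) / l^m\<bar> \<le> (1 / n) / l^m"
      proof -
        have "\<bar>l ^ m\<bar> = l ^ m" using l by simp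
        then show ?thesis unfolding abs_divide using lip[of "real m"] l by (simp only:) (intro divide_right_mono, auto)
      qed
      also have "\<dots> = \<bar>(l / n) * H (Suc m)\<bar>" unfolding H_def using True l npos by simp
      finally show ?thesis using Suc Tm by simp
    next
      case False
      then have "cl (real m) = 0 \<and> cl (real m + 1) = 0" by (auto intro!: cl0)
      then show ?thesis using Suc Tm by simp
    qed
  qed
  have NTx: "N (Tlam l x) \<le> (l / n) * N H"
  proof -
    have "N (Tlam l x) \<le> N (\<lambda>k. (l / n) * H k)" using mono[OF scale_in[OF HE]] Tx by blast
    also have "\<dots> = \<bar>l / n\<bar> * N H" by (rule N_scale[OF HE])
    also have "\<dots> = (l / n) * N H" using l npos by simp
    finally show ?thesis .
  qed
  have xp: "x p = 1 / l^p"
  proof -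
    have "cl (real p) = 1" unfolding cl_def using hp npos by (auto simp: field_simps min_def max_def)
    then show ?thesis unfolding x_def by simp
  qed
  have tpx: "t p \<le> N x" using coord_bound[OF xE, of p] xp l unfolding t_def by simp
  have "c * t p \<le> (l / n) * N H"
    using tpx c bb[OF xE] xpos NTx by (smt (verit) mult_left_mono)
  then have "c * (c * t p) \<le> c * ((l / n) * N H)" using c by (intro mult_left_mono) auto
  also have "\<dots> = (l / n) * (c * N H)" by simp
  also have "\<dots> \<le> (l / n) * (4 * l * t p)" using cH l npos by (intro mult_left_mono) auto
  finally have "c^2 * t p \<le> (4 * l^2 / n) * t p" by (simp add: power2_eq_square algebra_simps)
  then have "c^2 \<le> 4 * l^2 / n" using tpos[of p] by (simp only: mult_le_cancel_right_pos)
  then have "c^2 * n \<le> 4 * l^2" using npos by (simp add: field_simps)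
  moreover have "4 * l^2 < real n * c^2" using nr c by (simp add: field_simps)
  ultimately show False by (simp add: algebra_simps)
qed

end

definition Rv :: "real \<Rightarrow> seq \<Rightarrow> seq" where
  "Rv l a m = (\<Sum>n. l^n * a (m + 1 + n))"

definition phi :: "real \<Rightarrow> seq \<Rightarrow> real" where
  "phi l a = (\<Sum>k. l^(Suc k) * a k)"

lemma tinv_bound: "l > 0 \<Longrightarrow> \<bar>Tinv l a m\<bar> \<le> (\<Sum>n\<le>m. \<bar>a (m - n)\<bar> / l^(Suc n))"
proof (induction m)
  case 0 then show ?case by (simp add: abs_divide)
next
  case (Suc m)
  have "\<bar>Tinv l a (Suc m)\<bar> = \<bar>Tinv l a m - a (Suc m)\<bar> / l" using Suc.prems by (simp add: abs_divide)
  also have "\<dots> \<le> (\<bar>Tinv l a m\<bar> + \<bar>a (Suc m)\<bar>) / l" using Suc.prems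
    by (intro divide_right_mono) auto
  also have "\<dots> \<le> ((\<Sum>n\<le>m. \<bar>a (m - n)\<bar> / l^(Suc n)) + \<bar>a (Suc m)\<bar>) / l" using Suc
    by (intro divide_right_mono) auto
  also have "\<dots> = (\<Sum>n\<le>Suc m. \<bar>a (Suc m - n)\<bar> / l^(Suc n))"
    by (subst sum.atMost_Suc_shift) (simp add: sum_divide_distrib add_divide_distrib algebra_simps)
  finally show ?case .
qed

context BSLS begin

lemma k_plus_nonneg: "k_plus E N \<ge> 0"
proof -
  have "k_plus E N = Inf {opnorm E N (tau (int n)) powr (1 / real n) | n. n \<ge> 1}"
    unfolding k_plus_def using k_plus_Inf by (rule limI)
  also have "\<dots> \<ge> 0" by (rule cInf_greatest) auto
  finally show ?thesis .
qed

lemma k_minus_nonneg: "k_minus E N \<ge> 0"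
proof -
  have "k_minus E N = Inf {opnorm E N (tau (- int n)) powr (1 / real n) | n. n \<ge> 1}"
    unfolding k_minus_def using k_minus_Inf by (rule limI)
  also have "\<dots> \<ge> 0" by (rule cInf_greatest) auto
  finally show ?thesis .
qed

lemma neumann:
  assumes l: "l > 0" and lk: "k_plus E N < l"
  shows "\<exists>C>0. \<forall>a\<in>E. Tinv l a \<in> E \<and> N (Tinv l a) \<le> C * N a"
proof -
  define \<rho> where "\<rho> = (k_plus E N + l) / 2"
  have r0: "\<rho> > 0" and rk: "k_plus E N < \<rho>" and rl: "\<rho> < l"
    using lk k_plus_nonneg unfolding \<rho>_def by auto
  obtain K where K: "K \<ge> 1" "\<And>n x. x \<in> E \<Longrightarrow> N (tau (int n) x) \<le> K * \<rho> ^ n * N x"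
    using shift_pos_geom[OF rk] by blast
  define C where "C = (K / l) / (1 - \<rho> / l)"
  have rl1: "\<rho> / l < 1" using rl l by simp
  have C0: "C > 0" unfolding C_def using K l rl1 by auto
  have "Tinv l a \<in> E \<and> N (Tinv l a) \<le> C * N a" if a: "a \<in> E" for a
  proof -
    define f where "f n = (\<lambda>j. (1 / l^(Suc n)) * \<bar>tau (int n) a j\<bar>)" for n
    have fE: "f n \<in> E" for n unfolding f_def by (intro scale_in abs_in tau_in a)
    have fpos: "0 \<le> f n j" for n j unfolding f_def using l by simp
    have Nf: "N (f n) \<le> (K / l * N a) * (\<rho> / l) ^ n" for n
    proof -
      have "N (f n) = \<bar>1 / l^(Suc n)\<bar> * N (\<lambda>j. \<bar>tau (int n) a j\<bar>)"
        unfolding f_def by (rule N_scale[OF abs_in[OF tau_in[OF a]]])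
      also have "\<dots> = (1 / l^(Suc n)) * N (tau (int n) a)" using l N_abs[OF tau_in[OF a]] by simp
      also have "\<dots> \<le> (1 / l^(Suc n)) * (K * \<rho> ^ n * N a)" using K(2)[OF a] l
        by (intro mult_left_mono) auto
      also have "\<dots> = (K / l * N a) * (\<rho> / l) ^ n" using l by (simp add: power_divide)
      finally show ?thesis .
    qed
    have sg: "summable (\<lambda>n. (K / l * N a) * (\<rho> / l) ^ n)"
      using rl1 r0 l by (intro summable_mult summable_geometric) auto
    have sm: "summable (\<lambda>n. N (f n))"
      by (rule summable_comparison_test'[OF sg, of 0]) (use Nf N_nonneg fE in auto)
    obtain z where z: "z \<in> E" "(\<lambda>K. N ((\<Sum>n<K. f n) - z)) \<longlonglongrightarrow> 0" "N z \<le> (\<Sum>n. N (f n))"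
      using series_conv[OF fE sm] by blast
    have Nz: "N z \<le> C * N a"
    proof -
      have g: "(\<Sum>n. (\<rho> / l) ^ n) = 1 / (1 - \<rho> / l)"
        using rl1 r0 l by (intro suminf_geometric) auto
      have "(\<Sum>n. N (f n)) \<le> (\<Sum>n. (K / l * N a) * (\<rho> / l) ^ n)"
        using Nf sm sg by (intro suminf_le) auto
      also have "\<dots> = (K / l * N a) * (\<Sum>n. (\<rho> / l) ^ n)"
        using rl1 r0 l by (intro suminf_mult summable_geometric) auto
      also have "\<dots> = C * N a" unfolding g C_def by simp
      finally show ?thesis using z(3) by simp
    qed
    have bnd: "\<bar>Tinv l a m\<bar> \<le> \<bar>z m\<bar>" for m
    proof -
      have "(\<Sum>n<Suc m. f n m) = (\<Sum>n\<le>m. \<bar>a (m - n)\<bar> / l^(Suc n))"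
        unfolding lessThan_Suc_atMost by (intro sum.cong) (auto simp: f_def tau_pos)
      then have "\<bar>Tinv l a m\<bar> \<le> (\<Sum>n<Suc m. f n m)" using tinv_bound[OF l] by simp
      also have "\<dots> \<le> z m" using partial_le_limit(1)[OF fE fpos z(1) z(2)] .
      finally show ?thesis by simp
    qed
    then have "Tinv l a \<in> E \<and> N (Tinv l a) \<le> N z" using mono[OF z(1)] by blast
    then show ?thesis using Nz by auto
  qed
  then show ?thesis using C0 by blast
qed

lemma resolvent:
  assumes l: "l > 0" and lk: "l * k_minus E N < 1"
  shows "\<exists>C>0. \<forall>a\<in>E. (\<forall>m. summable (\<lambda>n. \<bar>l^n * a (m + 1 + n)\<bar>)) \<and> Rv l a \<in> E \<and> N (Rv l a) \<le> C * N a"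
proof -
  define \<rho> where "\<rho> = (k_minus E N + 1 / l) / 2"
  have kl: "k_minus E N < 1 / l" using lk l by (simp add: field_simps)
  have r0: "\<rho> > 0" and rk: "k_minus E N < \<rho>" and rl: "\<rho> < 1 / l"
    using kl k_minus_nonneg l unfolding \<rho>_def by auto
  obtain K where K: "K \<ge> 1" "\<And>n x. x \<in> E \<Longrightarrow> N (tau (- int n) x) \<le> K * \<rho> ^ n * N x"
    using shift_neg_geom[OF rk] by blast
  have lr1: "l * \<rho> < 1" using rl l by (simp add: field_simps)
  define C where "C = (K * \<rho>) / (1 - l * \<rho>)"
  have C0: "C > 0" unfolding C_def using K r0 lr1 by auto
  have "(\<forall>m. summable (\<lambda>n. \<bar>l^n * a (m + 1 + n)\<bar>)) \<and> Rv l a \<in> E \<and> N (Rv l a) \<le> C * N a"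
    if a: "a \<in> E" for a
  proof -
    define f where "f n = (\<lambda>j. l^n * \<bar>tau (- int (Suc n)) a j\<bar>)" for n
    have fE: "f n \<in> E" for n unfolding f_def by (intro scale_in abs_in tau_in a)
    have fpos: "0 \<le> f n j" for n j unfolding f_def using l by simp
    have fval: "f n j = \<bar>l^n * a (j + 1 + n)\<bar>" for n j
      unfolding f_def tau_neg using l by (simp add: abs_mult)
    have Nf: "N (f n) \<le> (K * \<rho> * N a) * (l * \<rho>) ^ n" for n
    proof -
      have "N (f n) = \<bar>l^n\<bar> * N (\<lambda>j. \<bar>tau (- int (Suc n)) a j\<bar>)"
        unfolding f_def by (rule N_scale[OF abs_in[OF tau_in[OF a]]])
      also have "\<dots> = l^n * N (tau (- int (Suc n)) a)" using l N_abs[OF tau_in[OF a]] by simp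
      also have "\<dots> \<le> l^n * (K * \<rho> ^ Suc n * N a)" using l
        by (intro mult_left_mono K(2)[OF a]) auto
      also have "\<dots> = (K * \<rho> * N a) * (l * \<rho>) ^ n" by (simp add: power_mult_distrib)
      finally show ?thesis .
    qed
    have sg: "summable (\<lambda>n. (K * \<rho> * N a) * (l * \<rho>) ^ n)"
      using lr1 r0 l by (intro summable_mult summable_geometric) auto
    have sm: "summable (\<lambda>n. N (f n))"
      by (rule summable_comparison_test'[OF sg, of 0]) (use Nf N_nonneg fE in auto)
    obtain z where z: "z \<in> E" "(\<lambda>K. N ((\<Sum>n<K. f n) - z)) \<longlonglongrightarrow> 0" "N z \<le> (\<Sum>n. N (f n))"
      using series_conv[OF fE sm] by blast
    have Nz: "N z \<le> C * N a"
    proof -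
      have g: "(\<Sum>n. (l * \<rho>) ^ n) = 1 / (1 - l * \<rho>)"
        using lr1 r0 l by (intro suminf_geometric) auto
      have "(\<Sum>n. N (f n)) \<le> (\<Sum>n. (K * \<rho> * N a) * (l * \<rho>) ^ n)"
        using Nf sm sg by (intro suminf_le) auto
      also have "\<dots> = (K * \<rho> * N a) * (\<Sum>n. (l * \<rho>) ^ n)"
        using lr1 r0 l by (intro suminf_mult summable_geometric) auto
      also have "\<dots> = C * N a" unfolding g C_def by simp
      finally show ?thesis using z(3) by simp
    qed
    have sums: "(\<lambda>n. \<bar>l^n * a (m + 1 + n)\<bar>) sums z m" for m
    proof -
      have "(\<lambda>K. \<Sum>n<K. f n m) \<longlonglongrightarrow> z m" using partial_le_limit(2)[OF fE fpos z(1) z(2)] .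
      then show ?thesis unfolding sums_def fval .
    qed
    have sumab: "summable (\<lambda>n. \<bar>l^n * a (m + 1 + n)\<bar>)" for m using sums by (rule sums_summable)
    have bnd: "\<bar>Rv l a m\<bar> \<le> \<bar>z m\<bar>" for m
    proof -
      have "\<bar>Rv l a m\<bar> \<le> (\<Sum>n. \<bar>l^n * a (m + 1 + n)\<bar>)" unfolding Rv_def by (rule summable_rabs[OF sumab])
      also have "\<dots> = z m" using sums by (rule sums_unique[symmetric])
      finally show ?thesis by simp
    qed
    then have "Rv l a \<in> E \<and> N (Rv l a) \<le> N z" using mono[OF z(1)] by blast
    then show ?thesis using Nz sumab by auto
  qed
  then show ?thesis using C0 by blast
qed

end

lemma phi_summable:
  fixes l :: real and a :: seq
  assumes l: "l > 0" and sa: "\<And>m. summable (\<lambda>n. \<bar>l^n * a (m + 1 + n)\<bar>)"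
  shows "summable (\<lambda>k. l^(Suc k) * a k)"
proof -
  have "summable (\<lambda>n. l^2 * \<bar>l^n * a (0 + 1 + n)\<bar>)" using sa[of 0] by (rule summable_mult)
  then have "summable (\<lambda>n. \<bar>l^(Suc (Suc n)) * a (Suc n)\<bar>)"
    using l by (simp add: abs_mult power2_eq_square algebra_simps)
  then have "summable (\<lambda>k. \<bar>l^(Suc k) * a k\<bar>)" by (subst summable_Suc_iff[symmetric])
  then show ?thesis by (rule summable_rabs_cancel)
qed

lemma phi_Tlam:
  fixes l :: real and x :: seq
  assumes sx: "summable (\<lambda>k. l^(Suc k) * x k)"
  shows "phi l (Tlam l x) = 0"
proof -
  have ps: "(\<Sum>k<Suc K. l^(Suc k) * Tlam l x k) = -(l^(Suc (Suc K)) * x K)" for K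
  proof (induction K)
    case 0 then show ?case by (simp add: Tlam_0 power2_eq_square)
  next
    case (Suc K)
    have "(\<Sum>k<Suc (Suc K). l^(Suc k) * Tlam l x k) = -(l^(Suc (Suc K)) * x K) + l^(Suc (Suc K)) * Tlam l x (Suc K)"
      using Suc by simp
    also have "\<dots> = -(l^(Suc (Suc (Suc K))) * x (Suc K))" by (simp add: Tlam_Suc algebra_simps)
    finally show ?case .
  qed
  have "(\<lambda>K. l^(Suc K) * x K) \<longlonglongrightarrow> 0" using sx by (rule summable_LIMSEQ_zero)
  then have "(\<lambda>K. - l * (l^(Suc K) * x K)) \<longlonglongrightarrow> - l * 0" by (intro tendsto_intros)
  then have "(\<lambda>K. \<Sum>k<Suc K. l^(Suc k) * Tlam l x k) \<longlonglongrightarrow> 0" unfolding ps by (simp add: algebra_simps)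
  then have "(\<lambda>K. \<Sum>k<K. l^(Suc k) * Tlam l x k) \<longlonglongrightarrow> 0" by (rule LIMSEQ_imp_Suc)
  then have "(\<lambda>k. l^(Suc k) * Tlam l x k) sums 0" unfolding sums_def .
  then show ?thesis unfolding phi_def by (rule sums_unique[symmetric])
qed

lemma T_Rv:
  fixes l :: real and a :: seq
  assumes l: "l > 0" and sa: "\<And>m. summable (\<lambda>n. \<bar>l^n * a (m + 1 + n)\<bar>)"
  shows "Tlam l (Rv l a) = (\<lambda>k. a k - (if k = 0 then phi l a / l else 0))"
proof
  fix k
  have sa': "summable (\<lambda>n. l^n * a (m + 1 + n))" for m using sa by (rule summable_rabs_cancel)
  show "Tlam l (Rv l a) k = a k - (if k = 0 then phi l a / l else 0)"
  proof (cases k)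
    case 0
    have sG: "summable (\<lambda>k. l^(Suc k) * a k)" by (rule phi_summable[OF l sa])
    have "(\<Sum>n. l^(Suc (Suc n)) * a (Suc n)) = phi l a - l * a 0"
      unfolding phi_def using suminf_split_head[OF sG] by simp
    moreover have "(\<Sum>n. l^(Suc (Suc n)) * a (Suc n)) = l^2 * Rv l a 0"
    proof -
      have "(\<Sum>n. l^2 * (l^n * a (0 + 1 + n))) = l^2 * (\<Sum>n. l^n * a (0 + 1 + n))"
        using sa'[of 0] by (rule suminf_mult)
      then show ?thesis unfolding Rv_def by (simp add: power2_eq_square algebra_simps)
    qed
    ultimately have "phi l a = l * a 0 + l^2 * Rv l a 0" by simp
    then show ?thesis using 0 l by (simp add: Tlam_0 power2_eq_square field_simps)
  next
    case (Suc m)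
    have "(\<Sum>n. l^(Suc n) * a (m + 1 + Suc n)) = Rv l a m - a (Suc m)"
      unfolding Rv_def using suminf_split_head[OF sa'[of m]] by simp
    moreover have "(\<Sum>n. l^(Suc n) * a (m + 1 + Suc n)) = l * Rv l a (Suc m)"
    proof -
      have "(\<Sum>n. l * (l^n * a (Suc m + 1 + n))) = l * (\<Sum>n. l^n * a (Suc m + 1 + n))"
        using sa'[of "Suc m"] by (rule suminf_mult)
      then show ?thesis unfolding Rv_def by (simp add: algebra_simps)
    qed
    ultimately show ?thesis using Suc by (simp add: Tlam_Suc)
  qed
qed


context BSLS begin

definition Au :: "nat \<Rightarrow> real" where "Au n = (SUP j. s (j + n) / s j)"
definition Bu :: "nat \<Rightarrow> real" where "Bu n = (SUP k. s k / s (n + k))"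

lemma Au_bdd: "bdd_above (range (\<lambda>j. s (j + n) / s j))"
proof (rule bdd_aboveI2)
  fix j show "s (j + n) / s j \<le> opnorm E N (tau (int n))"
    using s_shift_pos[of j n] s_pos[of j] by (simp add: divide_le_eq)
qed

lemma Bu_bdd: "bdd_above (range (\<lambda>k. s k / s (n + k)))"
proof (rule bdd_aboveI2)
  fix k show "s k / s (n + k) \<le> opnorm E N (tau (- int n))"
    using s_shift_neg[of k n] s_pos[of "n + k"] by (simp add: divide_le_eq add.commute)
qed

lemma Au_upper: "s (j + n) / s j \<le> Au n"
  unfolding Au_def by (rule cSUP_upper[OF UNIV_I Au_bdd])

lemma Bu_upper: "s k / s (n + k) \<le> Bu n"
  unfolding Bu_def by (rule cSUP_upper[OF UNIV_I Bu_bdd])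

lemma Au_pos: "Au n > 0"
proof -
  have "s n / s 0 > 0" using s_pos[of n] s_pos[of 0] by simp
  moreover have "s (0 + n) / s 0 \<le> Au n" by (rule Au_upper)
  ultimately show ?thesis by simp
qed

lemma Bu_pos: "Bu n > 0"
proof -
  have "s 0 / s n > 0" using s_pos[of n] s_pos[of 0] by simp
  moreover have "s 0 / s (n + 0) \<le> Bu n" by (rule Bu_upper)
  ultimately show ?thesis by simp
qed

lemma Au_sub: "Au (n + m) \<le> Au n * Au m"
  unfolding Au_def[of "n+m"]
proof (rule cSUP_least)
  fix j
  have "s (j + (n + m)) / s j = (s ((j + m) + n) / s (j + m)) * (s (j + m) / s j)"
    using s_pos[of "j+m"] by (simp add: algebra_simps)
  also have "\<dots> \<le> Au n * Au m"
    using Au_upper[of "j+m" n] Au_upper[of j m] s_pos Au_pos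
    by (intro mult_mono) (auto intro: less_imp_le)
  finally show "s (j + (n + m)) / s j \<le> Au n * Au m" .
qed simp

lemma Bu_sub: "Bu (n + m) \<le> Bu n * Bu m"
  unfolding Bu_def[of "n+m"]
proof (rule cSUP_least)
  fix k
  have "s k / s ((n + m) + k) = (s (m + k) / s (n + (m + k))) * (s k / s (m + k))"
    using s_pos[of "m+k"] by (simp add: algebra_simps)
  also have "\<dots> \<le> Bu n * Bu m"
    using Bu_upper[of "m+k" n] Bu_upper[of k m] s_pos Bu_pos
    by (intro mult_mono) (auto intro: less_imp_le)
  finally show "s k / s ((n + m) + k) \<le> Bu n * Bu m" .
qed simp

lemma kp_Au:
  "(SUP k\<in>{n..}. N (unitv k) / N (unitv (k - n))) = Au n"
proof -
  have "(\<lambda>k. N (unitv k) / N (unitv (k - n))) ` {n..} = (\<lambda>j. s (j + n) / s j) ` UNIV"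
  proof (intro equalityI subsetI)
    fix y assume "y \<in> (\<lambda>k. N (unitv k) / N (unitv (k - n))) ` {n..}"
    then obtain k where "k \<ge> n" "y = N (unitv k) / N (unitv (k - n))" by auto
    then show "y \<in> (\<lambda>j. s (j + n) / s j) ` UNIV"
      unfolding s_def by (intro image_eqI[of _ _ "k - n"]) auto
  next
    fix y assume "y \<in> (\<lambda>j. s (j + n) / s j) ` UNIV"
    then obtain j where "y = s (j + n) / s j" by auto
    then show "y \<in> (\<lambda>k. N (unitv k) / N (unitv (k - n))) ` {n..}"
      unfolding s_def by (intro image_eqI[of _ _ "j + n"]) auto
  qed
  then show ?thesis unfolding Au_def by simp
qed

lemma km_Bu: "(SUP k\<in>(UNIV::nat set). N (unitv k) / N (unitv (n + k))) = Bu n"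
  unfolding Bu_def s_def ..

lemma lim_Inf_ge:
  fixes q :: "nat \<Rightarrow> real"
  assumes pos: "\<And>n. q n > 0" and sub: "\<And>n m. q (n+m) \<le> q n * q m"
    and lim: "(\<lambda>n. q n powr (1 / real n)) \<longlonglongrightarrow> L" and n: "n \<ge> 1"
  shows "L \<ge> 0" "L ^ n \<le> q n"
proof -
  have f: "(\<lambda>n. q n powr (1 / real n)) \<longlonglongrightarrow> Inf {q n powr (1 / real n) | n. n \<ge> 1}"
    using pos sub by (intro fekete) auto
  have L: "L = Inf {q n powr (1 / real n) | n. n \<ge> 1}" using LIMSEQ_unique[OF lim f] .
  have bdd: "bdd_below {q n powr (1 / real n) | n. n \<ge> 1}" by (rule bdd_belowI[of _ 0]) auto
  show L0: "L \<ge> 0" unfolding L by (rule cInf_greatest) auto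
  have "L \<le> q n powr (1 / real n)" unfolding L using n bdd by (intro cInf_lower) auto
  then have "L ^ n \<le> (q n powr (1 / real n)) ^ n" using L0 by (intro power_mono) auto
  also have "\<dots> = q n" using pos[of n] n by (simp add: powr_inv_pow)
  finally show "L ^ n \<le> q n" .
qed

lemma kk_ge1:
  assumes kp: "(\<lambda>n. Au n powr (1 / real n)) \<longlonglongrightarrow> k_plus E N"
    and km: "(\<lambda>n. Bu n powr (1 / real n)) \<longlonglongrightarrow> k_minus E N"
  shows "k_plus E N * k_minus E N \<ge> 1"
proof -
  have lim: "(\<lambda>n. Au n powr (1 / real n) * Bu n powr (1 / real n)) \<longlonglongrightarrow> k_plus E N * k_minus E N"
    by (intro tendsto_intros kp km)
  have ge1: "1 \<le> Au n powr (1 / real n) * Bu n powr (1 / real n)" for n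
  proof -
    have "Au n * Bu n \<ge> (s n / s 0) * (s 0 / s n)"
      using Au_upper[of 0 n] Bu_upper[of 0 n] s_pos Au_pos[of n] by (intro mult_mono) (auto intro: less_imp_le)
    then have "Au n * Bu n \<ge> 1" using s_pos[of n] s_pos[of 0] by simp
    then have "1 \<le> (Au n * Bu n) powr (1 / real n)" by (intro ge_one_powr_ge_zero) auto
    moreover have "(Au n * Bu n) powr (1 / real n) = Au n powr (1 / real n) * Bu n powr (1 / real n)"
      using Au_pos[of n] Bu_pos[of n] by (meson powr_mult less_imp_le)
    ultimately show ?thesis by simp
  qed
  have ev: "\<exists>N. \<forall>n\<ge>N. 1 \<le> Au n powr (1 / real n) * Bu n powr (1 / real n)"
    by (intro exI[of _ 0] allI impI ge1)
  show ?thesis by (rule LIMSEQ_le_const[OF lim ev])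
qed

end

theorem proposition5p1:
  fixes E :: "seq set" and N :: "seq \<Rightarrow> real" and l :: real
  assumes lat: "banach_seq_lattice E N"
    and sep: "norm_separable E N"
    and units: "\<forall>k. unitv k \<in> E"
    and shifts: "\<forall>n::int. bounded_on E N (tau n)"
    and kp: "(\<lambda>n. (SUP k\<in>{n..}. N (unitv k) / N (unitv (k - n))) powr (1 / real n))
               \<longlonglongrightarrow> k_plus E N"
    and km: "(\<lambda>n. (SUP k\<in>(UNIV::nat set). N (unitv k) / N (unitv (n + k))) powr (1 / real n))
               \<longlonglongrightarrow> k_minus E N"
    and lpos: "l > 0"
  shows "((\<exists>c>0. \<forall>x\<in>E. N (Tlam l x) \<ge> c * N x) \<longleftrightarrow> N_closed E N (Tlam l ` E))
       \<and> (N_closed E N (Tlam l ` E) \<longleftrightarrow>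
            l \<in> {0<..<1 / k_minus E N} \<union> {k_plus E N<..})
       \<and> (l > k_plus E N \<longrightarrow> Tlam l ` E = E)
       \<and> (l < 1 / k_minus E N \<longrightarrow>
            (\<forall>a\<in>E. summable (\<lambda>k. l ^ (Suc k) * a k))
          \<and> Tlam l ` E = {a \<in> E. (\<Sum>k. l ^ (Suc k) * a k) = 0}
          \<and> N_closed E N (Tlam l ` E)
          \<and> (\<exists>v\<in>E. v \<notin> Tlam l ` E \<and>
               (\<forall>x\<in>E. \<exists>c y. y \<in> Tlam l ` E \<and> x = (\<lambda>k. c * v k + y k))))"
proof -
  interpret BSLS E N
    by unfold_locales (use lat units shifts in auto)
  have l0: "l \<noteq> 0" using lpos by simp
  have kpA: "(\<lambda>n. Au n powr (1 / real n)) \<longlonglongrightarrow> k_plus E N" using kp by (simp only: kp_Au)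
  have kmB: "(\<lambda>n. Bu n powr (1 / real n)) \<longlonglongrightarrow> k_minus E N" using km by (simp only: km_Bu)
  have kk: "k_plus E N * k_minus E N \<ge> 1" by (rule kk_ge1[OF kpA kmB])
  have kp0: "k_plus E N \<ge> 0" by (rule k_plus_nonneg)
  have km0: "k_minus E N > 0"
  proof -
    have "k_minus E N \<noteq> 0" using kk by auto
    then show ?thesis using k_minus_nonneg by simp
  qed
  have Au_ge: "k_plus E N ^ n \<le> Au n" if "n \<ge> 1" for n
    using lim_Inf_ge(2)[OF Au_pos Au_sub kpA that] .
  have Bu_ge: "k_minus E N ^ n \<le> Bu n" if "n \<ge> 1" for n
    using lim_Inf_ge(2)[OF Bu_pos Bu_sub kmB that] .
  define I where "I = (\<exists>c>0. \<forall>x\<in>E. N (Tlam l x) \<ge> c * N x)"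
  define Cl where "Cl = N_closed E N (Tlam l ` E)"
  define III where "III = (l \<in> {0<..<1 / k_minus E N} \<union> {k_plus E N<..})"
  have I_Cl: "I \<Longrightarrow> Cl"
  proof -
    assume I
    then obtain c where "c > 0" "\<forall>x\<in>E. c * N x \<le> N (Tlam l x)" unfolding I_def by auto
    then show Cl unfolding Cl_def by (rule bb_closed)
  qed
  have Cl_III: "Cl \<Longrightarrow> III"
  proof (rule ccontr)
    assume cl: Cl and n3: "\<not> III"
    have lk: "l \<le> k_plus E N" and lm: "1 / k_minus E N \<le> l"
      using n3 lpos unfolding III_def by auto
    have lkm: "1 / l \<le> k_minus E N" using lm lpos km0 by (simp add: field_simps)
    have r: "\<exists>j. s j / l^j < 2 * (s (j+m) / l^(j+m))" for m
    proof (cases "m = 0")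
      case True then show ?thesis using s_pos[of 0] by (intro exI[of _ 0]) simp
    next
      case False
      then have "l^m \<le> Au m" using Au_ge[of m] lk lpos by (meson less_imp_le power_mono order_trans less_one not_le)
      moreover have "l^m > 0" using lpos by simp
      ultimately have "l^m / 2 < Au m" by linarith
      then obtain j where j: "l^m / 2 < s (j + m) / s j"
        unfolding Au_def using less_cSUP_iff[OF _ Au_bdd] by blast
      have "l^m * s j < 2 * s (j + m)" using j s_pos[of j] by (simp add: field_simps)
      then have "s j / l^j < 2 * (s (j+m) / (l^j * l^m))" using lpos by (simp add: field_simps)
      then show ?thesis by (intro exI[of _ j]) (simp add: power_add)
    qed
    have i: "\<exists>j. s (j+m) / l^(j+m) < 2 * (s j / l^j)" for m
    proof (cases "m = 0")
      case True then show ?thesis using s_pos[of 0] by (intro exI[of _ 0]) simp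
    next
      case False
      then have "(1/l)^m \<le> Bu m" using Bu_ge[of m] lkm lpos
        by (meson less_imp_le power_mono order_trans less_one not_le zero_le_divide_1_iff)
      moreover have "(1/l)^m > 0" using lpos by simp
      ultimately have "(1/l)^m / 2 < Bu m" by linarith
      then obtain j where j: "(1/l)^m / 2 < s j / s (m + j)"
        unfolding Bu_def using less_cSUP_iff[OF _ Bu_bdd] by blast
      have "s (m + j) < 2 * l^m * s j" using j s_pos[of "m+j"] lpos by (simp add: field_simps power_one_over)
      then have "s (j+m) / (l^j * l^m) < 2 * (s j / l^j)" using lpos by (simp add: field_simps add.commute)
      then show ?thesis by (intro exI[of _ j]) (simp add: power_add)
    qed
    have "\<And>c. c > 0 \<Longrightarrow> \<exists>x\<in>E. (\<forall>k. 0 \<le> x k) \<and> N (Tlam l x) < c * N x"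
      using approx_eig[OF lpos _ r i] by blast
    then have "\<not> N_closed E N (Tlam l ` E)" by (rule not_closed[OF lpos])
    then show False using cl unfolding Cl_def by simp
  qed
  have III_I: "III \<Longrightarrow> I"
  proof -
    assume "III"
    then consider (a) "l < 1 / k_minus E N" | (b) "k_plus E N < l" unfolding III_def by auto
    then show I
    proof cases
      case b
      obtain C where C: "C > 0" "\<And>a. a \<in> E \<Longrightarrow> Tinv l a \<in> E \<and> N (Tinv l a) \<le> C * N a"
        using neumann[OF lpos b] by blast
      have "(1 / C) * N x \<le> N (Tlam l x)" if x: "x \<in> E" for x
      proof -
        have "N x \<le> C * N (Tlam l x)" using C(2)[OF Tlam_in[of x l, OF x]] Tinv_Tlam[OF l0] by simp
        then show ?thesis using C(1) by (simp add: field_simps)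
      qed
      then show I unfolding I_def using C(1) by (intro exI[of _ "1/C"]) auto
    next
      case a
      have lk: "l * k_minus E N < 1" using a km0 by (simp add: field_simps)
      obtain C where C0: "C > 0" and Cb: "\<forall>a\<in>E. (\<forall>m. summable (\<lambda>n. \<bar>l^n * a (m + 1 + n)\<bar>)) \<and> Rv l a \<in> E \<and> N (Rv l a) \<le> C * N a"
        using resolvent[OF lpos lk] by (elim exE conjE) (rule that)
      have C: "C > 0" "\<And>a. a \<in> E \<Longrightarrow> (\<forall>m. summable (\<lambda>n. \<bar>l^n * a (m + 1 + n)\<bar>)) \<and> Rv l a \<in> E \<and> N (Rv l a) \<le> C * N a"
        using C0 Cb by auto
      have "(1 / C) * N x \<le> N (Tlam l x)" if x: "x \<in> E" for x
      proof -
        have TE: "Tlam l x \<in> E" using Tlam_in[of x l, OF x] .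
        have sx: "summable (\<lambda>k. l^(Suc k) * x k)" using phi_summable[OF lpos] C(2)[OF x] by blast
        have "phi l (Tlam l x) = 0" by (rule phi_Tlam[OF sx])
        then have "Tlam l (Rv l (Tlam l x)) = Tlam l x" using T_Rv[OF lpos] C(2)[OF TE] by auto
        then have "Rv l (Tlam l x) = x" by (rule Tlam_inj[OF l0])
        then have "N x \<le> C * N (Tlam l x)" using C(2)[OF TE] by simp
        then show ?thesis using C(1) by (simp add: field_simps)
      qed
      then show I unfolding I_def using C(1) by (intro exI[of _ "1/C"]) auto
    qed
  qed
  have c1: "I \<longleftrightarrow> Cl" using I_Cl Cl_III III_I by blast
  have c2: "Cl \<longleftrightarrow> III" using I_Cl Cl_III III_I by blast
  have c3: "l > k_plus E N \<longrightarrow> Tlam l ` E = E"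
  proof
    assume b: "l > k_plus E N"
    obtain C where C: "\<And>a. a \<in> E \<Longrightarrow> Tinv l a \<in> E \<and> N (Tinv l a) \<le> C * N a"
      using neumann[OF lpos b] by blast
    show "Tlam l ` E = E"
    proof
      show "Tlam l ` E \<subseteq> E" using Tlam_in by blast
      show "E \<subseteq> Tlam l ` E"
      proof
        fix a assume a: "a \<in> E"
        have "a = Tlam l (Tinv l a)" using Tlam_Tinv[OF l0] by simp
        then show "a \<in> Tlam l ` E" using C[OF a] by blast
      qed
    qed
  qed
  have c4: "l < 1 / k_minus E N \<longrightarrow>
            (\<forall>a\<in>E. summable (\<lambda>k. l ^ (Suc k) * a k))
          \<and> Tlam l ` E = {a \<in> E. (\<Sum>k. l ^ (Suc k) * a k) = 0}
          \<and> N_closed E N (Tlam l ` E)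
          \<and> (\<exists>v\<in>E. v \<notin> Tlam l ` E \<and>
               (\<forall>x\<in>E. \<exists>c y. y \<in> Tlam l ` E \<and> x = (\<lambda>k. c * v k + y k)))"
  proof
    assume a: "l < 1 / k_minus E N"
    have lk: "l * k_minus E N < 1" using a km0 by (simp add: field_simps)
    obtain C where C0: "C > 0" and Cb: "\<forall>a\<in>E. (\<forall>m. summable (\<lambda>n. \<bar>l^n * a (m + 1 + n)\<bar>)) \<and> Rv l a \<in> E \<and> N (Rv l a) \<le> C * N a"
      using resolvent[OF lpos lk] by (elim exE conjE) (rule that)
    have C: "\<And>a. a \<in> E \<Longrightarrow> (\<forall>m. summable (\<lambda>n. \<bar>l^n * a (m + 1 + n)\<bar>)) \<and> Rv l a \<in> E \<and> N (Rv l a) \<le> C * N a"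
      using Cb by auto
    have summ: "\<forall>a\<in>E. summable (\<lambda>k. l ^ (Suc k) * a k)" using phi_summable[OF lpos] C by blast
    have range: "Tlam l ` E = {a \<in> E. (\<Sum>k. l ^ (Suc k) * a k) = 0}"
    proof
      show "Tlam l ` E \<subseteq> {a \<in> E. (\<Sum>k. l ^ (Suc k) * a k) = 0}"
      proof
        fix y assume "y \<in> Tlam l ` E"
        then obtain x where x: "x \<in> E" "y = Tlam l x" by blast
        have "phi l (Tlam l x) = 0" using phi_Tlam summ x(1) by blast
        then show "y \<in> {a \<in> E. (\<Sum>k. l ^ (Suc k) * a k) = 0}" using x Tlam_in unfolding phi_def by blast
      qed
      show "{a \<in> E. (\<Sum>k. l ^ (Suc k) * a k) = 0} \<subseteq> Tlam l ` E"
      proof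
        fix a assume "a \<in> {a \<in> E. (\<Sum>k. l ^ (Suc k) * a k) = 0}"
        then have aE: "a \<in> E" and p0: "phi l a = 0" unfolding phi_def by auto
        have "Tlam l (Rv l a) = a" using T_Rv[OF lpos] C[OF aE] p0 by auto
        then show "a \<in> Tlam l ` E" using C[OF aE] by (metis image_eqI)
      qed
    qed
    have closed: "N_closed E N (Tlam l ` E)" using c2 a lpos unfolding Cl_def III_def by auto
    have pu: "phi l (unitv 0) = l"
    proof -
      have "(\<lambda>k. l ^ (Suc k) * unitv 0 k) = (\<lambda>k. if k = 0 then l ^ (Suc k) else 0)"
        by (auto simp: unitv_def fun_eq_iff)
      then have "(\<lambda>k. l ^ (Suc k) * unitv 0 k) sums l ^ (Suc 0)" using sums_single[of 0 "\<lambda>k. l ^ Suc k"] by simp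
      then show ?thesis unfolding phi_def by (simp add: sums_unique[symmetric])
    qed
    have codim: "\<exists>v\<in>E. v \<notin> Tlam l ` E \<and> (\<forall>x\<in>E. \<exists>c y. y \<in> Tlam l ` E \<and> x = (\<lambda>k. c * v k + y k))"
    proof (intro bexI[of _ "unitv 0"] conjI ballI)
      show "unitv 0 \<in> E" using units by simp
      show "unitv 0 \<notin> Tlam l ` E" using range pu lpos unfolding phi_def by auto
    next
      fix x assume x: "x \<in> E"
      define c where "c = phi l x / l"
      define y where "y = (\<lambda>k. x k - c * unitv 0 k)"
      have yE: "y \<in> E"
      proof -
        have "y = x - (\<lambda>k. c * unitv 0 k)" unfolding y_def by auto
        then show ?thesis using diff_in[OF x coord_vec_in] by simp
      qed
      have s1: "(\<lambda>k. l ^ (Suc k) * x k) sums phi l x" unfolding phi_def using summ x by (simp add: summable_sums)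
      have "(\<lambda>k. l ^ (Suc k) * unitv 0 k) = (\<lambda>k. if k = 0 then l ^ (Suc k) else 0)"
        by (auto simp: unitv_def fun_eq_iff)
      then have "(\<lambda>k. l ^ (Suc k) * unitv 0 k) sums l" using sums_single[of 0 "\<lambda>k. l ^ Suc k"] by simp
      then have s2: "(\<lambda>k. c * (l ^ (Suc k) * unitv 0 k)) sums (c * l)" by (rule sums_mult)
      have "(\<lambda>k. l ^ (Suc k) * x k - c * (l ^ (Suc k) * unitv 0 k)) sums (phi l x - c * l)"
        by (rule sums_diff[OF s1 s2])
      moreover have "phi l x - c * l = 0" unfolding c_def using lpos by simp
      moreover have "(\<lambda>k. l ^ (Suc k) * x k - c * (l ^ (Suc k) * unitv 0 k)) = (\<lambda>k. l ^ (Suc k) * y k)"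
        unfolding y_def by (auto simp: algebra_simps fun_eq_iff)
      ultimately have "(\<lambda>k. l ^ (Suc k) * y k) sums 0" by simp
      then have "(\<Sum>k. l ^ (Suc k) * y k) = 0" by (simp add: sums_unique[symmetric])
      then have "y \<in> Tlam l ` E" using range yE by blast
      moreover have "x = (\<lambda>k. c * unitv 0 k + y k)" unfolding y_def by auto
      ultimately show "\<exists>c y. y \<in> Tlam l ` E \<and> x = (\<lambda>k. c * unitv 0 k + y k)" by blast
    qed
    show "(\<forall>a\<in>E. summable (\<lambda>k. l ^ (Suc k) * a k))
          \<and> Tlam l ` E = {a \<in> E. (\<Sum>k. l ^ (Suc k) * a k) = 0}
          \<and> N_closed E N (Tlam l ` E)
          \<and> (\<exists>v\<in>E. v \<notin> Tlam l ` E \<and>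
               (\<forall>x\<in>E. \<exists>c y. y \<in> Tlam l ` E \<and> x = (\<lambda>k. c * v k + y k)))"
      using summ range closed codim by blast
  qed
  show ?thesis using c1 c2 c3 c4 unfolding I_def Cl_def III_def by blast
qed


end
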